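(* Let $E\subset\mathbb{R}$ be the Cantor set associated with a sequence $(l_j)_{j\ge0}$, and let $\mathrm{Gap}_j:=l_{j-1}-2l_j$ for $j\geq1$. Assume that $\mathrm{Gap}_j<l_j$ for all $j\geq1$ and $\mathrm{Gap}_j<\mathrm{Gap}_{j-1}$ for all $j\geq2$. If $s>0$ and $$\sum_{j\geq2}\frac{\mathrm{Gap}_{j-1}^{2-2s}}{\mathrm{Gap}_j^2}\Big(\sum_{k\geq j}2^k\mathrm{Gap}_k\Big)<\infty,$$ then the characteristic function $\chi_E$ of $E$ belongs to $H^{s,2}(\mathbb{R})$ (and hence $E$ is not $(s,2)$-null). In particular, for the fat Cantor set $G_{\alpha,\beta}$ with $0<\alpha<1/2$ and $0<\beta<1-2\alpha$, $\chi_{G_{\alpha,\beta}}\in H^{s,2}(\mathbb{R})$ for all $s<s_{\alpha,2}$, where $s_{\alpha,2}:=\frac12\big(1+\frac{\log2}{\log\alpha}\big)\in(0,1/2)$.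
   Context: $H^{s,2}(\mathbb{R})$ is the Sobolev space of tempered distributions $u$ with $\int_{\mathbb{R}}(1+|\xi|^2)^s|\hat u(\xi)|^2\,d\xi<\infty$. A set $E\subset\mathbb{R}$ is $(s,2)$-null if no non-zero element of $H^{s,2}(\mathbb{R})$ has (distributional) support contained in $E$. Cantor sets: given $(l_j)_{j\ge0}$ with $l_0=1$ and $0<l_{j+1}<l_j/2$, let $E_0=[0,1]$ and obtain $E_{j+1}$ from $E_j$ by removing an open interval of length $l_j-2l_{j+1}$ from the middle of each of the $2^j$ intervals (of length $l_j$) composing $E_j$; the Cantor set is $E=\bigcap_j E_j$. The fat Cantor set $G_{\alpha,\beta}$ is the Cantor set with $l_{j+1}=\frac12(l_j-\beta\alpha^j)$ for $j\geq0$. *)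

theory Defs
  imports "HOL-Analysis.Analysis"
begin

text \<open>Left endpoints of the 2^j intervals (each of length l j) composing E_j.
  An interval [a, a + l j] is replaced by [a, a + l (j+1)] and
  [a + l j - l (j+1), a + l j], i.e. the open middle interval of length
  l j - 2 l (j+1) is removed.\<close>
primrec cantor_lefts :: "(nat \<Rightarrow> real) \<Rightarrow> nat \<Rightarrow> real set" where
  "cantor_lefts l 0 = {0}"
| "cantor_lefts l (Suc j) =
     (\<Union>a\<in>cantor_lefts l j. {a, a + l j - l (Suc j)})"

definition cantor_level :: "(nat \<Rightarrow> real) \<Rightarrow> nat \<Rightarrow> real set" where
  "cantor_level l j = (\<Union>a\<in>cantor_lefts l j. {a .. a + l j})"

definition cantor_set :: "(nat \<Rightarrow> real) \<Rightarrow> real set" where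
  "cantor_set l = (\<Inter>j. cantor_level l j)"

text \<open>Gap_j = l_{j-1} - 2 l_j (meaningful for j \<ge> 1).\<close>
definition gap :: "(nat \<Rightarrow> real) \<Rightarrow> nat \<Rightarrow> real" where
  "gap l j = l (j - 1) - 2 * l j"

definition fourier :: "(real \<Rightarrow> real) \<Rightarrow> real \<Rightarrow> complex" where
  "fourier f \<xi> = (\<integral>x. complex_of_real (f x) * exp (- (2 * pi * \<i> * complex_of_real (x * \<xi>))) \<partial>lborel)"

definition in_sobolev :: "real \<Rightarrow> (real \<Rightarrow> real) \<Rightarrow> bool" where
  "in_sobolev s f \<longleftrightarrow> integrable lborel f \<and>
     (\<integral>\<^sup>+ \<xi>. ennreal ((1 + \<xi>\<^sup>2) powr s * (cmod (fourier f \<xi>))\<^sup>2) \<partial>lborel) < \<infinity>"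

primrec fat_l :: "real \<Rightarrow> real \<Rightarrow> nat \<Rightarrow> real" where
  "fat_l \<alpha> \<beta> 0 = 1"
| "fat_l \<alpha> \<beta> (Suc j) = (fat_l \<alpha> \<beta> j - \<beta> * \<alpha> ^ j) / 2"

definition s_alpha2 :: "real \<Rightarrow> real" where
  "s_alpha2 \<alpha> = (1 + ln 2 / ln \<alpha>) / 2"

end

theory Submission
  imports Defs "HOL-Probability.Probability"
begin


locale cantor =
  fixes l :: "nat \<Rightarrow> real"
  assumes l0: "l 0 = 1" and lS: "\<And>j. 0 < l (Suc j) \<and> l (Suc j) < l j / 2"
begin

lemma lpos: "0 < l j"
  by (cases j) (use l0 lS in auto)

lemma ldec: "l (Suc j) < l j" using lS[of j] lpos[of j] by linarith

lemma lle1: "l j \<le> 1"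
proof (induction j)
  case 0 then show ?case using l0 by simp
next
  case (Suc j) then show ?case using ldec[of j] by linarith
qed

lemma lefts_finite: "finite (cantor_lefts l j)"
  by (induction j) auto

lemma lefts_card: "card (cantor_lefts l j) \<le> 2 ^ j"
proof (induction j)
  case 0 then show ?case by simp
next
  case (Suc j)
  have "card (cantor_lefts l (Suc j)) \<le> (\<Sum>a\<in>cantor_lefts l j. card {a, a + l j - l (Suc j)})"
    by (simp add: card_UN_le lefts_finite)
  also have "\<dots> \<le> (\<Sum>a\<in>cantor_lefts l j. 2)"
    by (intro sum_mono) (simp add: card_insert_le_m1)
  also have "\<dots> = 2 * card (cantor_lefts l j)" by simp
  also have "\<dots> \<le> 2 ^ Suc j" using Suc by simp
  finally show ?case .
qed

lemma lefts_bounds: "a \<in> cantor_lefts l j \<Longrightarrow> 0 \<le> a \<and> a + l j \<le> 1"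
proof (induction j arbitrary: a)
  case 0 then show ?case using l0 by simp
next
  case (Suc j)
  then obtain c where c: "c \<in> cantor_lefts l j" "a = c \<or> a = c + l j - l (Suc j)" by auto
  from Suc.IH[OF c(1)] c(2) lS[of j] show ?case by auto
qed

lemma lefts_sep: "a \<in> cantor_lefts l j \<Longrightarrow> b \<in> cantor_lefts l j \<Longrightarrow> a < b \<Longrightarrow> a + l j < b"
proof (induction j arbitrary: a b)
  case 0 then show ?case by simp
next
  case (Suc j)
  from Suc.prems obtain c where c: "c \<in> cantor_lefts l j" "a = c \<or> a = c + l j - l (Suc j)" by auto
  from Suc.prems obtain d where d: "d \<in> cantor_lefts l j" "b = d \<or> b = d + l j - l (Suc j)" by auto
  have ls: "0 < l (Suc j)" "2 * l (Suc j) < l j" using lS[of j] by auto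
  consider "c = d" | "c < d" | "d < c" by linarith
  then show ?case
  proof cases
    case 1 then show ?thesis using c(2) d(2) ls Suc.prems(3) by auto
  next
    case 2 then have "c + l j < d" using Suc.IH c(1) d(1) by blast
    then show ?thesis using c(2) d(2) ls by auto
  next
    case 3 then have "d + l j < c" using Suc.IH c(1) d(1) by blast
    then show ?thesis using c(2) d(2) ls Suc.prems(3) by auto
  qed
qed

lemma level_mono: "cantor_level l (Suc j) \<subseteq> cantor_level l j"
proof
  fix x assume "x \<in> cantor_level l (Suc j)"
  then obtain b where b0: "b \<in> cantor_lefts l (Suc j)" "x \<in> {b..b + l (Suc j)}"
    unfolding cantor_level_def by blast
  then have b: "b \<in> cantor_lefts l (Suc j)" "b \<le> x" "x \<le> b + l (Suc j)" by auto
  then obtain c where c: "c \<in> cantor_lefts l j" "b = c \<or> b = c + l j - l (Suc j)" by auto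
  have "c \<le> x \<and> x \<le> c + l j" using b c(2) lS[of j] by auto
  then show "x \<in> cantor_level l j" using c(1) unfolding cantor_level_def by auto
qed

lemma level0: "cantor_level l 0 = {0..1}"
  using l0 by (simp add: cantor_level_def)

lemma E_sub: "cantor_set l \<subseteq> {0..1}"
  unfolding cantor_set_def using level0 by blast

lemma closed_level: "closed (cantor_level l j)"
  unfolding cantor_level_def by (intro closed_UN lefts_finite) auto

lemma closed_E: "closed (cantor_set l)"
  unfolding cantor_set_def using closed_level by blast

lemma E_sets[measurable]: "cantor_set l \<in> sets borel"
  using closed_E by (simp add: borel_closed)

lemma notin_E:
  assumes "y \<notin> cantor_set l"
  shows "y < 0 \<or> 1 < y \<or> (\<exists>k. \<exists>a\<in>cantor_lefts l k. a + l (Suc k) < y \<and> y < a + l k - l (Suc k))"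
proof (rule ccontr)
  assume H: "\<not> ?thesis"
  have "y \<in> cantor_level l j" for j
  proof (induction j)
    case 0 then show ?case using H level0 by auto
  next
    case (Suc k)
    then obtain a where a0: "a \<in> cantor_lefts l k" "y \<in> {a..a + l k}"
      unfolding cantor_level_def by blast
    then have a: "a \<in> cantor_lefts l k" "a \<le> y" "y \<le> a + l k" by auto
    from H a(1) have nn: "\<not> (a + l (Suc k) < y \<and> y < a + l k - l (Suc k))" by blast
    have m1: "a \<in> cantor_lefts l (Suc k)" "a + l k - l (Suc k) \<in> cantor_lefts l (Suc k)" using a(1) by auto
    show ?case
    proof (cases "y \<le> a + l (Suc k)")
      case True
      then have "y \<in> {a..a + l (Suc k)}" using a by simp
      then show ?thesis using m1(1) unfolding cantor_level_def by blast
    next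
      case False
      then have "a + l k - l (Suc k) \<le> y" using nn by linarith
      then have "y \<in> {a + l k - l (Suc k)..(a + l k - l (Suc k)) + l (Suc k)}" using a by simp
      then show ?thesis using m1(2) unfolding cantor_level_def by blast
    qed
  qed
  then show False using assms unfolding cantor_set_def by blast
qed

lemma gap_near:
  assumes a: "a \<in> cantor_lefts l k" and y: "a + l (Suc k) < y" "y < a + l k - l (Suc k)"
    and x: "x \<in> cantor_set l" and h: "\<bar>x - y\<bar> \<le> h"
  shows "y \<le> a + l (Suc k) + h \<or> a + l k - l (Suc k) - h \<le> y"
proof -
  have h1: "y \<le> x + h" "x - h \<le> y" using h by (auto simp: abs_le_iff)
  have "x \<in> cantor_level l (Suc k)" using x unfolding cantor_set_def by auto
  then obtain b where b0: "b \<in> cantor_lefts l (Suc k)" "x \<in> {b..b + l (Suc k)}"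
    unfolding cantor_level_def by blast
  then have b: "b \<in> cantor_lefts l (Suc k)" "b \<le> x" "x \<le> b + l (Suc k)" by auto
  then obtain c where c: "c \<in> cantor_lefts l k" "b = c \<or> b = c + l k - l (Suc k)" by auto
  have ls: "0 < l (Suc k)" "2 * l (Suc k) < l k" using lS[of k] by auto
  consider "c = a" | "c < a" | "a < c" by linarith
  then show ?thesis
  proof cases
    case 1 
    from c(2) show ?thesis
    proof
      assume "b = c" then show ?thesis using 1 b h1 by linarith
    next
      assume "b = c + l k - l (Suc k)" then show ?thesis using 1 b h1 by linarith
    qed
  next
    case 2 then have "c + l k < a" using lefts_sep c(1) a by blast
    then have "x < a" using b c(2) ls by linarith
    then show ?thesis using h1 ls by linarith
  next
    case 3 then have "a + l k < c" using lefts_sep c(1) a by blast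
    then have "a + l k < x" using b c(2) ls by linarith
    then show ?thesis using h1 y ls by linarith
  qed
qed

end


context cantor begin

definition Nset :: "real \<Rightarrow> nat \<Rightarrow> real \<Rightarrow> real set" where
  "Nset a k h = {a + l (Suc k) <..< a + l k - l (Suc k)} \<inter>
     ({..a + l (Suc k) + h} \<union> {a + l k - l (Suc k) - h..})"

definition Sset :: "real \<Rightarrow> real set" where
  "Sset h = {-h..<0} \<union> {1<..1+h} \<union> (\<Union>k. \<Union>a\<in>cantor_lefts l k. Nset a k h)"

lemma Nset_sets[measurable]: "Nset a k h \<in> sets borel"
  unfolding Nset_def by measurable

lemma UN_sets[measurable]: "(\<Union>a\<in>cantor_lefts l k. Nset a k h) \<in> sets borel"
  by (rule sets.finite_UN[OF lefts_finite]) simp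

lemma Sset_sets[measurable]: "Sset h \<in> sets borel"
  unfolding Sset_def
  by (intro sets.Un sets.countable_UN UN_sets) auto

lemma bad_sub:
  assumes "y \<notin> cantor_set l" "x \<in> cantor_set l" "\<bar>x - y\<bar> \<le> h"
  shows "y \<in> Sset h"
proof -
  have x01: "0 \<le> x" "x \<le> 1" using assms(2) E_sub by auto
  have h1: "y \<le> x + h" "x - h \<le> y" using assms(3) by (auto simp: abs_le_iff)
  from notin_E[OF assms(1)] consider "y < 0" | "1 < y" | "\<exists>k. \<exists>a\<in>cantor_lefts l k. a + l (Suc k) < y \<and> y < a + l k - l (Suc k)"
    by blast
  then show ?thesis
  proof cases
    case 1 then have "y \<in> {-h..<0}" using x01 h1 by simp
    then show ?thesis unfolding Sset_def by blast
  next
    case 2 then have "y \<in> {1<..1+h}" using x01 h1 by simp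
    then show ?thesis unfolding Sset_def by blast
  next
    case 3
    then obtain k a where a: "a \<in> cantor_lefts l k" "a + l (Suc k) < y" "y < a + l k - l (Suc k)" by blast
    from gap_near[OF a assms(2,3)] have "y \<in> Nset a k h" using a unfolding Nset_def by auto
    then show ?thesis using a(1) unfolding Sset_def by blast
  qed
qed

lemma gap_Suc: "gap l (Suc k) = l k - 2 * l (Suc k)"
  by (simp add: gap_def)

lemma emeasure_Nset:
  assumes h: "0 \<le> h"
  shows "emeasure lborel (Nset a k h) \<le> ennreal (min (gap l (Suc k)) (2 * h))"
proof -
  have ls: "0 < l (Suc k)" "2 * l (Suc k) < l k" using lS[of k] by auto
  have e1: "emeasure lborel (Nset a k h) \<le> ennreal (gap l (Suc k))"
  proof -
    have "emeasure lborel (Nset a k h) \<le> emeasure lborel {a + l (Suc k) <..< a + l k - l (Suc k)}"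
      by (intro emeasure_mono) (auto simp: Nset_def)
    also have "\<dots> = ennreal (gap l (Suc k))" using ls by (simp add: gap_Suc)
    finally show ?thesis .
  qed
  have e2: "emeasure lborel (Nset a k h) \<le> ennreal (2 * h)"
  proof -
    have "emeasure lborel (Nset a k h) \<le> emeasure lborel ({a + l (Suc k) .. a + l (Suc k) + h} \<union> {a + l k - l (Suc k) - h .. a + l k - l (Suc k)})"
      by (intro emeasure_mono) (auto simp: Nset_def)
    also have "\<dots> \<le> emeasure lborel {a + l (Suc k) .. a + l (Suc k) + h} + emeasure lborel {a + l k - l (Suc k) - h .. a + l k - l (Suc k)}"
      by (intro emeasure_subadditive) auto
    also have "\<dots> = ennreal h + ennreal h" using h by simp
    also have "\<dots> = ennreal (2 * h)" using h by (simp add: ennreal_plus[symmetric])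
    finally show ?thesis .
  qed
  show ?thesis
  proof (cases "gap l (Suc k) \<le> 2 * h")
    case True then show ?thesis using e1 by simp
  next
    case False then show ?thesis using e2 by simp
  qed
qed

lemma emeasure_Sset:
  assumes h: "0 \<le> h"
  shows "emeasure lborel (Sset h) \<le> ennreal (2 * h) + (\<Sum>k. ennreal (2 ^ k * min (gap l (Suc k)) (2 * h)))"
proof -
  have U: "emeasure lborel (\<Union>a\<in>cantor_lefts l k. Nset a k h) \<le> ennreal (2 ^ k * min (gap l (Suc k)) (2 * h))" for k
  proof -
    have "emeasure lborel (\<Union>a\<in>cantor_lefts l k. Nset a k h) \<le> (\<Sum>a\<in>cantor_lefts l k. emeasure lborel (Nset a k h))"
      by (intro emeasure_subadditive_finite lefts_finite) auto
    also have "\<dots> \<le> (\<Sum>a\<in>cantor_lefts l k. ennreal (min (gap l (Suc k)) (2 * h)))"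
      by (intro sum_mono emeasure_Nset h)
    also have "\<dots> = of_nat (card (cantor_lefts l k)) * ennreal (min (gap l (Suc k)) (2 * h))"
      by simp
    also have "\<dots> \<le> of_nat (2 ^ k) * ennreal (min (gap l (Suc k)) (2 * h))"
      by (intro mult_right_mono of_nat_le_iff[THEN iffD2, OF lefts_card]) simp
    also have "\<dots> = ennreal (2 ^ k * min (gap l (Suc k)) (2 * h))"
      by (simp add: ennreal_mult' ennreal_of_nat_eq_real_of_nat)
    finally show ?thesis .
  qed
  have "emeasure lborel (Sset h) \<le> emeasure lborel ({-h..<0} \<union> {1<..1+h}) + emeasure lborel (\<Union>k. \<Union>a\<in>cantor_lefts l k. Nset a k h)"
    unfolding Sset_def
    by (intro emeasure_subadditive) (auto intro!: sets.countable_UN UN_sets)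
  also have "emeasure lborel ({-h..<0} \<union> {1<..1+h}) \<le> emeasure lborel {-h..<0} + emeasure lborel {1<..1+h}"
    by (intro emeasure_subadditive) auto
  also have "\<dots> = ennreal (2 * h)" using h by (simp add: ennreal_plus[symmetric])
  also have "emeasure lborel (\<Union>k. \<Union>a\<in>cantor_lefts l k. Nset a k h) \<le> (\<Sum>k. emeasure lborel (\<Union>a\<in>cantor_lefts l k. Nset a k h))"
    by (intro emeasure_subadditive_countably) (auto intro!: UN_sets)
  also have "\<dots> \<le> (\<Sum>k. ennreal (2 ^ k * min (gap l (Suc k)) (2 * h)))"
    by (intro suminf_le U) auto
  finally show ?thesis by (simp add: add_mono)
qed

end


lemma gauss_cos: "(\<integral>u. std_normal_density u * cos (a * u) \<partial>lborel) = exp (-(a\<^sup>2)/2)"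
proof -
  have int: "integrable lborel (\<lambda>x. std_normal_density x *\<^sub>R iexp (a * x))"
    by (rule Bochner_Integration.integrable_bound[OF integrable_normal_density[of 1 0]])
       (auto simp: norm_mult)
  have "complex_of_real (exp (-(a\<^sup>2)/2)) = char std_normal_distribution a"
    by (simp add: char_std_normal_distribution)
  also have "\<dots> = (\<integral>x. std_normal_density x *\<^sub>R iexp (a * x) \<partial>lborel)"
    unfolding char_def by (subst integral_density) auto
  finally have "exp (-(a\<^sup>2)/2) = Re (\<integral>x. std_normal_density x *\<^sub>R iexp (a * x) \<partial>lborel)"
    by (metis Re_complex_of_real)
  also have "\<dots> = (\<integral>x. Re (std_normal_density x *\<^sub>R iexp (a * x)) \<partial>lborel)"
    by (rule integral_Re[OF int, symmetric])
  also have "\<dots> = (\<integral>x. std_normal_density x * cos (a * x) \<partial>lborel)"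
    by (intro Bochner_Integration.integral_cong) (auto simp: Re_exp)
  finally show ?thesis ..
qed

definition gw :: "real \<Rightarrow> real \<Rightarrow> real" where
  "gw \<sigma> \<xi> = exp (- ((\<xi> / \<sigma>)\<^sup>2 / 2))"

definition gK :: "real \<Rightarrow> real \<Rightarrow> real" where
  "gK \<sigma> t = normal_density 0 (1 / (2 * pi * \<sigma>)) t"

lemma gw_integrable: "0 < \<sigma> \<Longrightarrow> integrable lborel (gw \<sigma>)"
proof -
  assume s: "0 < \<sigma>"
  have "gw \<sigma> = (\<lambda>x. (sqrt (2 * pi * \<sigma>\<^sup>2)) * normal_density 0 \<sigma> x)"
    using s by (auto simp: fun_eq_iff gw_def normal_density_def power_divide)
  then show ?thesis using s by (simp add: integrable_normal_density)
qed

lemma gw_cos: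
  assumes s: "0 < \<sigma>"
  shows "(\<integral>\<xi>. gw \<sigma> \<xi> * cos (2 * pi * t * \<xi>) \<partial>lborel) = gK \<sigma> t"
proof -
  have "(\<integral>\<xi>. gw \<sigma> \<xi> * cos (2 * pi * t * \<xi>) \<partial>lborel)
      = \<bar>\<sigma>\<bar> *\<^sub>R (\<integral>u. gw \<sigma> (0 + \<sigma> * u) * cos (2 * pi * t * (0 + \<sigma> * u)) \<partial>lborel)"
    using s by (intro lborel_integral_real_affine) simp
  also have "(\<lambda>u. gw \<sigma> (0 + \<sigma> * u) * cos (2 * pi * t * (0 + \<sigma> * u)))
      = (\<lambda>u. sqrt (2 * pi) * (std_normal_density u * cos ((2 * pi * t * \<sigma>) * u)))"
    using s by (auto simp: fun_eq_iff gw_def std_normal_density_def power_divide mult_ac)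
  also have "(\<integral>u. sqrt (2 * pi) * (std_normal_density u * cos ((2 * pi * t * \<sigma>) * u)) \<partial>lborel)
      = sqrt (2 * pi) * exp (-((2 * pi * t * \<sigma>)\<^sup>2)/2)"
    by (simp add: gauss_cos)
  also have "\<bar>\<sigma>\<bar> *\<^sub>R (sqrt (2 * pi) * exp (-((2 * pi * t * \<sigma>)\<^sup>2)/2)) = gK \<sigma> t"
  proof -
    have a: "sqrt (2 * pi * (1 / (2 * pi * \<sigma>))\<^sup>2) = 1 / (sqrt (2 * pi) * \<sigma>)"
      using s by (simp add: real_sqrt_mult real_sqrt_divide power_divide field_simps)
    have b: "sqrt (2 * pi) * sqrt (2 * pi) = 2 * pi" by simp
    show ?thesis using s unfolding gK_def normal_density_def a
      by (simp add: field_simps power_mult_distrib b)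
  qed
  finally show ?thesis .
qed

lemma gK_nonneg: "0 \<le> gK \<sigma> t"
  by (simp add: gK_def)

lemma gK_shift_integral: "0 < \<sigma> \<Longrightarrow> (\<integral>y. gK \<sigma> (x - y) \<partial>lborel) = 1"
proof -
  assume s: "0 < \<sigma>"
  have "(\<lambda>y. gK \<sigma> (x - y)) = normal_density x (1 / (2 * pi * \<sigma>))"
    by (auto simp: fun_eq_iff gK_def normal_density_def power2_commute)
  then show ?thesis using s by simp
qed

lemma gK_shift_integrable: "0 < \<sigma> \<Longrightarrow> integrable lborel (\<lambda>y. gK \<sigma> (x - y))"
proof -
  assume s: "0 < \<sigma>"
  have "(\<lambda>y. gK \<sigma> (x - y)) = normal_density x (1 / (2 * pi * \<sigma>))"
    by (auto simp: fun_eq_iff gK_def normal_density_def power2_commute)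
  then show ?thesis using s by (simp add: integrable_normal_density)
qed


definition FC :: "(real \<Rightarrow> real) \<Rightarrow> real \<Rightarrow> real" where
  "FC g \<xi> = (\<integral>x. g x * cos (2 * pi * x * \<xi>) \<partial>lborel)"

definition FS :: "(real \<Rightarrow> real) \<Rightarrow> real \<Rightarrow> real" where
  "FS g \<xi> = (\<integral>x. g x * sin (2 * pi * x * \<xi>) \<partial>lborel)"

definition PP :: "(real \<Rightarrow> real) \<Rightarrow> real \<Rightarrow> real" where
  "PP g \<xi> = (FC g \<xi>)\<^sup>2 + (FS g \<xi>)\<^sup>2"

lemma FC_meas[measurable]:
  assumes [measurable]: "g \<in> borel_measurable borel"
  shows "FC g \<in> borel_measurable borel"
  unfolding FC_def by measurable

lemma FS_meas[measurable]:
  assumes [measurable]: "g \<in> borel_measurable borel"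
  shows "FS g \<in> borel_measurable borel"
  unfolding FS_def by measurable

lemma PP_meas[measurable]:
  assumes [measurable]: "g \<in> borel_measurable borel"
  shows "PP g \<in> borel_measurable borel"
  unfolding PP_def by measurable

lemma int_gb:
  fixes g c :: "real \<Rightarrow> real"
  assumes "integrable lborel g" "c \<in> borel_measurable borel" "\<And>x. \<bar>c x\<bar> \<le> 1"
  shows "integrable lborel (\<lambda>x. g x * c x)"
proof (rule Bochner_Integration.integrable_bound[OF assms(1)])
  show "(\<lambda>x. g x * c x) \<in> borel_measurable lborel"
    using assms borel_measurable_integrable by (simp add: borel_measurable_times)
  show "AE x in lborel. norm (g x * c x) \<le> norm (g x)"
    using assms(3) by (auto simp: abs_mult intro!: mult_left_le)
qed

lemma int_gcos: "integrable lborel (g::real\<Rightarrow>real) \<Longrightarrow> integrable lborel (\<lambda>x. g x * cos (a * x + b))"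
  by (rule int_gb[where c="\<lambda>x::real. cos (a * x + b)"]) auto
lemma int_gsin: "integrable lborel (g::real\<Rightarrow>real) \<Longrightarrow> integrable lborel (\<lambda>x. g x * sin (a * x + b))"
  by (rule int_gb[where c="\<lambda>x::real. sin (a * x + b)"]) auto

lemma int_gcos': "integrable lborel g \<Longrightarrow> integrable lborel (\<lambda>x. g x * cos (2 * pi * x * \<xi>))"
  using int_gcos[of g "2 * pi * \<xi>" 0] by (simp add: mult_ac)
lemma int_gsin': "integrable lborel g \<Longrightarrow> integrable lborel (\<lambda>x. g x * sin (2 * pi * x * \<xi>))"
  using int_gsin[of g "2 * pi * \<xi>" 0] by (simp add: mult_ac)

lemma FC_bound: "integrable lborel g \<Longrightarrow> \<bar>FC g \<xi>\<bar> \<le> (\<integral>x. \<bar>g x\<bar> \<partial>lborel)"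
proof -
  assume g: "integrable lborel g"
  have "\<bar>FC g \<xi>\<bar> \<le> (\<integral>x. \<bar>g x * cos (2 * pi * x * \<xi>)\<bar> \<partial>lborel)"
    unfolding FC_def by (rule integral_abs_bound)
  also have "\<dots> \<le> (\<integral>x. \<bar>g x\<bar> \<partial>lborel)"
    by (rule integral_mono[where f="\<lambda>x. \<bar>g x * cos (2 * pi * x * \<xi>)\<bar>" and g="\<lambda>x. \<bar>g x\<bar>"])
       (use g integrable_abs[OF int_gcos'[OF g]] in \<open>auto simp: abs_mult intro: mult_left_le\<close>)
  finally show ?thesis .
qed

lemma FS_bound: "integrable lborel g \<Longrightarrow> \<bar>FS g \<xi>\<bar> \<le> (\<integral>x. \<bar>g x\<bar> \<partial>lborel)"
proof -
  assume g: "integrable lborel g"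
  have "\<bar>FS g \<xi>\<bar> \<le> (\<integral>x. \<bar>g x * sin (2 * pi * x * \<xi>)\<bar> \<partial>lborel)"
    unfolding FS_def by (rule integral_abs_bound)
  also have "\<dots> \<le> (\<integral>x. \<bar>g x\<bar> \<partial>lborel)"
    by (rule integral_mono[where f="\<lambda>x. \<bar>g x * sin (2 * pi * x * \<xi>)\<bar>" and g="\<lambda>x. \<bar>g x\<bar>"])
       (use g integrable_abs[OF int_gsin'[OF g]] in \<open>auto simp: abs_mult intro: mult_left_le\<close>)
  finally show ?thesis .
qed

lemma fourier_cmod:
  assumes g: "integrable lborel g"
  shows "(cmod (fourier g \<xi>))\<^sup>2 = PP g \<xi>"
proof -
  have gm: "g \<in> borel_measurable borel" using g by (simp add: borel_measurable_integrable)
  have eq: "(\<lambda>x. complex_of_real (g x) * exp (- (2 * pi * \<i> * complex_of_real (x * \<xi>))))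
     = (\<lambda>x. complex_of_real (g x * cos (2 * pi * x * \<xi>)) - \<i> * complex_of_real (g x * sin (2 * pi * x * \<xi>)))"
  proof
    fix x
    have ee: "exp (- (2 * pi * \<i> * complex_of_real (x * \<xi>))) = complex_of_real (cos (2 * pi * x * \<xi>)) - \<i> * complex_of_real (sin (2 * pi * x * \<xi>))"
      by (rule complex_eqI) (simp_all add: Re_exp Im_exp mult.assoc)
    then show "complex_of_real (g x) * exp (- (2 * pi * \<i> * complex_of_real (x * \<xi>))) =
      complex_of_real (g x * cos (2 * pi * x * \<xi>)) - \<i> * complex_of_real (g x * sin (2 * pi * x * \<xi>))"
      unfolding ee by (simp add: algebra_simps)
  qed
  have i1: "integrable lborel (\<lambda>x. complex_of_real (g x * cos (2 * pi * x * \<xi>)))"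
    by (rule integrable_bounded_linear[OF bounded_linear_of_real int_gcos'[OF g]])
  have i2: "integrable lborel (\<lambda>x. \<i> * complex_of_real (g x * sin (2 * pi * x * \<xi>)))"
    by (intro integrable_mult_right integrable_bounded_linear[OF bounded_linear_of_real int_gsin'[OF g]])
  have "fourier g \<xi> = complex_of_real (FC g \<xi>) - \<i> * complex_of_real (FS g \<xi>)"
    unfolding fourier_def eq FC_def FS_def
    by (subst Bochner_Integration.integral_diff[OF i1 i2]) (simp del: of_real_mult)
  then show ?thesis by (simp add: cmod_power2 PP_def)
qed

lemma FC_shift:
  assumes g: "integrable lborel g"
  shows "FC (\<lambda>x. g (x - h)) \<xi> = cos (2 * pi * h * \<xi>) * FC g \<xi> - sin (2 * pi * h * \<xi>) * FS g \<xi>"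
proof -
  have "FC (\<lambda>x. g (x - h)) \<xi> = \<bar>1\<bar> *\<^sub>R (\<integral>x. g (h + 1 * x - h) * cos (2 * pi * (h + 1 * x) * \<xi>) \<partial>lborel)"
    unfolding FC_def by (rule lborel_integral_real_affine[where f="\<lambda>x. g (x - h) * cos (2 * pi * x * \<xi>)" and c=1 and t=h]) simp
  also have "\<dots> = (\<integral>x. cos (2 * pi * h * \<xi>) * (g x * cos (2 * pi * x * \<xi>)) - sin (2 * pi * h * \<xi>) * (g x * sin (2 * pi * x * \<xi>)) \<partial>lborel)"
    by (simp, intro Bochner_Integration.integral_cong) (auto simp: distrib_left distrib_right cos_add algebra_simps)
  also have "\<dots> = cos (2 * pi * h * \<xi>) * FC g \<xi> - sin (2 * pi * h * \<xi>) * FS g \<xi>"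
    unfolding FC_def FS_def using int_gcos'[OF g] int_gsin'[OF g] by simp
  finally show ?thesis .
qed

lemma FS_shift:
  assumes g: "integrable lborel g"
  shows "FS (\<lambda>x. g (x - h)) \<xi> = sin (2 * pi * h * \<xi>) * FC g \<xi> + cos (2 * pi * h * \<xi>) * FS g \<xi>"
proof -
  have "FS (\<lambda>x. g (x - h)) \<xi> = \<bar>1\<bar> *\<^sub>R (\<integral>x. g (h + 1 * x - h) * sin (2 * pi * (h + 1 * x) * \<xi>) \<partial>lborel)"
    unfolding FS_def by (rule lborel_integral_real_affine[where f="\<lambda>x. g (x - h) * sin (2 * pi * x * \<xi>)" and c=1 and t=h]) simp
  also have "\<dots> = (\<integral>x. sin (2 * pi * h * \<xi>) * (g x * cos (2 * pi * x * \<xi>)) + cos (2 * pi * h * \<xi>) * (g x * sin (2 * pi * x * \<xi>)) \<partial>lborel)"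
    by (simp, intro Bochner_Integration.integral_cong) (auto simp: distrib_left distrib_right sin_add algebra_simps)
  also have "\<dots> = sin (2 * pi * h * \<xi>) * FC g \<xi> + cos (2 * pi * h * \<xi>) * FS g \<xi>"
    unfolding FC_def FS_def using int_gcos'[OF g] int_gsin'[OF g] by simp
  finally show ?thesis .
qed

lemma PP_diff_shift:
  assumes g: "integrable lborel g"
  shows "PP (\<lambda>x. g x - g (x - h)) \<xi> = (2 - 2 * cos (2 * pi * h * \<xi>)) * PP g \<xi>"
proof -
  have gh: "integrable lborel (\<lambda>x. g (x - h))"
    using lborel_integrable_real_affine[OF g, of 1 "-h"] by simp
  have c: "FC (\<lambda>x. g x - g (x - h)) \<xi> = FC g \<xi> - FC (\<lambda>x. g (x - h)) \<xi>"
  proof -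
    have "(\<lambda>x. (g x - g (x - h)) * cos (2 * pi * x * \<xi>)) = (\<lambda>x. g x * cos (2 * pi * x * \<xi>) - g (x - h) * cos (2 * pi * x * \<xi>))"
      by (auto simp: algebra_simps)
    then show ?thesis
      unfolding FC_def using Bochner_Integration.integral_diff[OF int_gcos'[OF g] int_gcos'[OF gh]] by simp
  qed
  have s: "FS (\<lambda>x. g x - g (x - h)) \<xi> = FS g \<xi> - FS (\<lambda>x. g (x - h)) \<xi>"
  proof -
    have "(\<lambda>x. (g x - g (x - h)) * sin (2 * pi * x * \<xi>)) = (\<lambda>x. g x * sin (2 * pi * x * \<xi>) - g (x - h) * sin (2 * pi * x * \<xi>))"
      by (auto simp: algebra_simps)
    then show ?thesis
      unfolding FS_def using Bochner_Integration.integral_diff[OF int_gsin'[OF g] int_gsin'[OF gh]] by simp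
  qed
  define C where "C = cos (2 * pi * h * \<xi>)"
  define S where "S = sin (2 * pi * h * \<xi>)"
  have cs: "S\<^sup>2 + C\<^sup>2 = 1" unfolding C_def S_def by simp
  show ?thesis
    unfolding PP_def c s FC_shift[OF g] FS_shift[OF g] C_def[symmetric] S_def[symmetric]
  proof -
    have "(FC g \<xi> - (C * FC g \<xi> - S * FS g \<xi>))\<^sup>2 + (FS g \<xi> - (S * FC g \<xi> + C * FS g \<xi>))\<^sup>2
        = (1 - 2 * C + (S\<^sup>2 + C\<^sup>2)) * ((FC g \<xi>)\<^sup>2 + (FS g \<xi>)\<^sup>2)"
      by (simp add: power2_eq_square algebra_simps)
    then show "(FC g \<xi> - (C * FC g \<xi> - S * FS g \<xi>))\<^sup>2 + (FS g \<xi> - (S * FC g \<xi> + C * FS g \<xi>))\<^sup>2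
        = (2 - 2 * C) * ((FC g \<xi>)\<^sup>2 + (FS g \<xi>)\<^sup>2)" using cs by simp
  qed
qed


lemma gw_meas[measurable]: "gw \<sigma> \<in> borel_measurable borel"
  unfolding gw_def by measurable

lemma gK_meas[measurable]: "gK \<sigma> \<in> borel_measurable borel"
  unfolding gK_def normal_density_def by measurable

lemma gK_sym: "gK \<sigma> (x - y) = gK \<sigma> (y - x)"
  by (simp add: gK_def normal_density_def power2_commute)

lemma gw_nonneg: "0 \<le> gw \<sigma> \<xi>" by (simp add: gw_def)
lemma gw_le1: "gw \<sigma> \<xi> \<le> 1" by (simp add: gw_def)

lemma prod_integrable:
  fixes a b :: "real \<Rightarrow> real"
  assumes ai: "integrable lborel a" and bi: "integrable lborel b"
  shows "integrable (lborel \<Otimes>\<^sub>M lborel) (\<lambda>(x,y). a x * b y)"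
proof (rule lborel_pair.Fubini_integrable)
  have [measurable]: "a \<in> borel_measurable borel" "b \<in> borel_measurable borel"
    using ai bi by (auto simp: borel_measurable_integrable)
  show "(\<lambda>(x,y). a x * b y) \<in> borel_measurable (lborel \<Otimes>\<^sub>M lborel)" by measurable
  have "(\<lambda>x. \<integral>y. norm (case (x, y) of (x, y) \<Rightarrow> a x * b y) \<partial>lborel) = (\<lambda>x. \<bar>a x\<bar> * (\<integral>y. \<bar>b y\<bar> \<partial>lborel))"
    by (simp add: abs_mult)
  then show "integrable lborel (\<lambda>x. \<integral>y. norm (case (x, y) of (x, y) \<Rightarrow> a x * b y) \<partial>lborel)"
    using ai by simp
  show "AE x in lborel. integrable lborel (\<lambda>y. case (x, y) of (x, y) \<Rightarrow> a x * b y)"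
    using bi by simp
qed

locale plg =
  fixes g :: "real \<Rightarrow> real"
  assumes gi: "integrable lborel g" and gb: "\<And>x. \<bar>g x\<bar> \<le> 1"
begin

lemma gm[measurable]: "g \<in> borel_measurable borel"
  using gi by (simp add: borel_measurable_integrable)

definition "A = (\<integral>x. \<bar>g x\<bar> \<partial>lborel)"

lemma A_nonneg: "0 \<le> A" unfolding A_def by simp

lemma g2_int: "integrable lborel (\<lambda>x. (g x)\<^sup>2)"
proof (rule Bochner_Integration.integrable_bound[OF gi])
  show "(\<lambda>x. (g x)\<^sup>2) \<in> borel_measurable lborel" by measurable
  show "AE x in lborel. norm ((g x)\<^sup>2) \<le> norm (g x)"
  proof (rule AE_I2)
    fix x
    have "\<bar>g x\<bar> * \<bar>g x\<bar> \<le> \<bar>g x\<bar>" by (rule mult_right_le_one_le) (auto simp: gb)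
    then show "norm ((g x)\<^sup>2) \<le> norm (g x)" by (simp add: power2_eq_square abs_mult)
  qed
qed

lemma PP_expand: "PP g \<xi> = (\<integral>x. g x * (cos (2 * pi * x * \<xi>) * FC g \<xi> + sin (2 * pi * x * \<xi>) * FS g \<xi>) \<partial>lborel)"
proof -
  have "(\<lambda>x. g x * (cos (2 * pi * x * \<xi>) * FC g \<xi> + sin (2 * pi * x * \<xi>) * FS g \<xi>))
     = (\<lambda>x. (g x * cos (2 * pi * x * \<xi>)) * FC g \<xi> + (g x * sin (2 * pi * x * \<xi>)) * FS g \<xi>)"
    by (auto simp: algebra_simps)
  then show ?thesis
    using int_gcos'[OF gi, of \<xi>] int_gsin'[OF gi, of \<xi>]
    by (simp add: PP_def FC_def[of g \<xi>] FS_def[of g \<xi>] power2_eq_square)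
qed

lemma cosdiff_int: "cos (2 * pi * x * \<xi>) * FC g \<xi> + sin (2 * pi * x * \<xi>) * FS g \<xi>
   = (\<integral>y. g y * cos (2 * pi * (x - y) * \<xi>) \<partial>lborel)"
proof -
  have "(\<lambda>y. g y * cos (2 * pi * (x - y) * \<xi>))
     = (\<lambda>y. cos (2 * pi * x * \<xi>) * (g y * cos (2 * pi * y * \<xi>)) + sin (2 * pi * x * \<xi>) * (g y * sin (2 * pi * y * \<xi>)))"
  proof
    fix y
    have "cos (2 * pi * (x - y) * \<xi>) = cos (2 * pi * x * \<xi> - 2 * pi * y * \<xi>)"
      by (simp add: algebra_simps)
    then show "g y * cos (2 * pi * (x - y) * \<xi>) = cos (2 * pi * x * \<xi>) * (g y * cos (2 * pi * y * \<xi>)) + sin (2 * pi * x * \<xi>) * (g y * sin (2 * pi * y * \<xi>))"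
      by (simp add: cos_diff algebra_simps)
  qed
  then show ?thesis
    using int_gcos'[OF gi, of \<xi>] int_gsin'[OF gi, of \<xi>]
    by (simp add: FC_def FS_def)
qed

lemma FC_absb: "\<bar>FC g \<xi>\<bar> \<le> A" unfolding A_def by (rule FC_bound[OF gi])
lemma FS_absb: "\<bar>FS g \<xi>\<bar> \<le> A" unfolding A_def by (rule FS_bound[OF gi])

lemma I1:
  assumes s: "0 < \<sigma>"
  shows "(\<integral>\<xi>. gw \<sigma> \<xi> * PP g \<xi> \<partial>lborel) = (\<integral>x. g x * (\<integral>y. g y * gK \<sigma> (x - y) \<partial>lborel) \<partial>lborel)"
proof -
  define F where "F = (\<lambda>x \<xi>. gw \<sigma> \<xi> * (g x * (cos (2 * pi * x * \<xi>) * FC g \<xi> + sin (2 * pi * x * \<xi>) * FS g \<xi>)))"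
  have Fm[measurable]: "(\<lambda>(x, \<xi>). F x \<xi>) \<in> borel_measurable (lborel \<Otimes>\<^sub>M lborel)"
    unfolding F_def by measurable
  have "(\<integral>\<xi>. gw \<sigma> \<xi> * PP g \<xi> \<partial>lborel) = (\<integral>\<xi>. (\<integral>x. F x \<xi> \<partial>lborel) \<partial>lborel)"
    unfolding F_def by (simp add: PP_expand)
  also have "\<dots> = (\<integral>x. (\<integral>\<xi>. F x \<xi> \<partial>lborel) \<partial>lborel)"
  proof (rule lborel_pair.Fubini_integral)
    have bi: "integrable (lborel \<Otimes>\<^sub>M lborel) (\<lambda>(x, \<xi>). (2 * A * \<bar>g x\<bar>) * gw \<sigma> \<xi>)"
      by (rule prod_integrable) (use gi gw_integrable[OF s] in auto)
    show "integrable (lborel \<Otimes>\<^sub>M lborel) (\<lambda>(x, \<xi>). F x \<xi>)"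
    proof (rule Bochner_Integration.integrable_bound[OF bi Fm], rule AE_I2)
      fix p :: "real \<times> real"
      obtain x \<xi> where p: "p = (x, \<xi>)" by (cases p)
      have c1: "\<bar>cos (2 * pi * x * \<xi>) * FC g \<xi>\<bar> \<le> A"
        using FC_absb[of \<xi>] by (auto simp: abs_mult intro: mult_le_one order_trans[OF mult_left_le_one_le[of "\<bar>FC g \<xi>\<bar>"]])
      have c2: "\<bar>sin (2 * pi * x * \<xi>) * FS g \<xi>\<bar> \<le> A"
        using FS_absb[of \<xi>] by (auto simp: abs_mult intro: mult_le_one order_trans[OF mult_left_le_one_le[of "\<bar>FS g \<xi>\<bar>"]])
      have "\<bar>cos (2 * pi * x * \<xi>) * FC g \<xi> + sin (2 * pi * x * \<xi>) * FS g \<xi>\<bar> \<le> 2 * A"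
        using c1 c2 by linarith
      then have "\<bar>g x\<bar> * \<bar>cos (2 * pi * x * \<xi>) * FC g \<xi> + sin (2 * pi * x * \<xi>) * FS g \<xi>\<bar> \<le> \<bar>g x\<bar> * (2 * A)"
        by (intro mult_left_mono) auto
      then have "gw \<sigma> \<xi> * (\<bar>g x\<bar> * \<bar>cos (2 * pi * x * \<xi>) * FC g \<xi> + sin (2 * pi * x * \<xi>) * FS g \<xi>\<bar>) \<le> gw \<sigma> \<xi> * (\<bar>g x\<bar> * (2 * A))"
        by (rule mult_left_mono[OF _ gw_nonneg])
      then show "norm ((\<lambda>(x, \<xi>). F x \<xi>) p) \<le> norm ((\<lambda>(x, \<xi>). 2 * A * \<bar>g x\<bar> * gw \<sigma> \<xi>) p)"
        unfolding p F_def using gw_nonneg[of \<sigma> \<xi>] A_nonneg by (simp add: abs_mult mult_ac)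
    qed
  qed
  also have "\<dots> = (\<integral>x. g x * (\<integral>y. g y * gK \<sigma> (x - y) \<partial>lborel) \<partial>lborel)"
  proof (rule Bochner_Integration.integral_cong[OF refl])
    fix x
    define G where "G = (\<lambda>y \<xi>. gw \<sigma> \<xi> * (g y * cos (2 * pi * (x - y) * \<xi>)))"
    have Gm[measurable]: "(\<lambda>(y, \<xi>). G y \<xi>) \<in> borel_measurable (lborel \<Otimes>\<^sub>M lborel)"
      unfolding G_def by measurable
    have "(\<integral>\<xi>. F x \<xi> \<partial>lborel) = (\<integral>\<xi>. g x * (\<integral>y. G y \<xi> \<partial>lborel) \<partial>lborel)"
      unfolding F_def G_def cosdiff_int by (intro Bochner_Integration.integral_cong refl, subst integral_mult_right_zero) (simp add: ac_simps)
    also have "\<dots> = g x * (\<integral>\<xi>. (\<integral>y. G y \<xi> \<partial>lborel) \<partial>lborel)" by simp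
    also have "(\<integral>\<xi>. (\<integral>y. G y \<xi> \<partial>lborel) \<partial>lborel) = (\<integral>y. (\<integral>\<xi>. G y \<xi> \<partial>lborel) \<partial>lborel)"
    proof (rule lborel_pair.Fubini_integral)
      have bi: "integrable (lborel \<Otimes>\<^sub>M lborel) (\<lambda>(y, \<xi>). \<bar>g y\<bar> * gw \<sigma> \<xi>)"
        by (rule prod_integrable) (use gi gw_integrable[OF s] in auto)
      show "integrable (lborel \<Otimes>\<^sub>M lborel) (\<lambda>(y, \<xi>). G y \<xi>)"
      proof (rule Bochner_Integration.integrable_bound[OF bi Gm], rule AE_I2)
        fix p :: "real \<times> real"
        obtain y \<xi> where p: "p = (y, \<xi>)" by (cases p)
        have "\<bar>g y\<bar> * \<bar>cos (2 * pi * (x - y) * \<xi>)\<bar> \<le> \<bar>g y\<bar>"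
          by (intro mult_left_le) auto
        then have "gw \<sigma> \<xi> * (\<bar>g y\<bar> * \<bar>cos (2 * pi * (x - y) * \<xi>)\<bar>) \<le> gw \<sigma> \<xi> * \<bar>g y\<bar>"
          by (rule mult_left_mono[OF _ gw_nonneg])
        then show "norm ((\<lambda>(y, \<xi>). G y \<xi>) p) \<le> norm ((\<lambda>(y, \<xi>). \<bar>g y\<bar> * gw \<sigma> \<xi>) p)"
          unfolding p G_def using gw_nonneg[of \<sigma> \<xi>] by (simp add: abs_mult mult_ac)
      qed
    qed
    also have "(\<lambda>y. (\<integral>\<xi>. G y \<xi> \<partial>lborel)) = (\<lambda>y. g y * gK \<sigma> (x - y))"
    proof
      fix y
      have "(\<integral>\<xi>. G y \<xi> \<partial>lborel) = g y * (\<integral>\<xi>. gw \<sigma> \<xi> * cos (2 * pi * (x - y) * \<xi>) \<partial>lborel)"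
      proof -
        have "(\<lambda>\<xi>. G y \<xi>) = (\<lambda>\<xi>. g y * (gw \<sigma> \<xi> * cos (2 * pi * (x - y) * \<xi>)))"
          unfolding G_def by (rule ext) (rule mult.left_commute)
        then show ?thesis by (simp only: integral_mult_right_zero)
      qed
      also have "\<dots> = g y * gK \<sigma> (x - y)" using gw_cos[OF s, of "x - y"] by simp
      finally show "(\<integral>\<xi>. G y \<xi> \<partial>lborel) = g y * gK \<sigma> (x - y)" .
    qed
    finally show "(\<integral>\<xi>. F x \<xi> \<partial>lborel) = g x * (\<integral>y. g y * gK \<sigma> (x - y) \<partial>lborel)" .
  qed
  finally show ?thesis .
qed

end


lemma gw_mono: "0 < a \<Longrightarrow> a \<le> b \<Longrightarrow> gw a \<xi> \<le> gw b \<xi>"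
proof -
  assume ab: "0 < a" "a \<le> b"
  have "\<bar>\<xi> / b\<bar> \<le> \<bar>\<xi> / a\<bar>" using ab by (simp add: abs_divide divide_left_mono)
  then have "\<bar>\<xi> / b\<bar>\<^sup>2 \<le> \<bar>\<xi> / a\<bar>\<^sup>2" by (rule power_mono) simp
  then have "(\<xi> / b)\<^sup>2 \<le> (\<xi> / a)\<^sup>2" by (simp only: power2_abs)
  then show ?thesis by (simp add: gw_def)
qed

context plg begin

lemma Kx_eq: "(\<lambda>x. gK \<sigma> (x - y)) = (\<lambda>x. gK \<sigma> (y - x))"
  by (rule ext) (rule gK_sym)

lemma Kint_x: "0 < \<sigma> \<Longrightarrow> integrable lborel (\<lambda>x. gK \<sigma> (x - y))"
  unfolding Kx_eq by (rule gK_shift_integrable)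

lemma Kone_x: "0 < \<sigma> \<Longrightarrow> (\<integral>x. gK \<sigma> (x - y) \<partial>lborel) = 1"
  unfolding Kx_eq by (rule gK_shift_integral)

lemma I2:
  assumes s: "0 < \<sigma>"
  shows "(\<integral>x. g x * (\<integral>y. g y * gK \<sigma> (x - y) \<partial>lborel) \<partial>lborel) \<le> (\<integral>x. (g x)\<^sup>2 \<partial>lborel)"
proof -
  have H1: "integrable (lborel \<Otimes>\<^sub>M lborel) (\<lambda>(y, x). (g y)\<^sup>2 * gK \<sigma> (x - y))"
  proof (rule lborel_pair.Fubini_integrable)
    show "(\<lambda>(y, x). (g y)\<^sup>2 * gK \<sigma> (x - y)) \<in> borel_measurable (lborel \<Otimes>\<^sub>M lborel)" by measurable
    have "(\<lambda>y. \<integral>x. norm (case (y, x) of (y, x) \<Rightarrow> (g y)\<^sup>2 * gK \<sigma> (x - y)) \<partial>lborel) = (\<lambda>y. (g y)\<^sup>2)"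
    proof
      fix y
      have "(\<integral>x. norm (case (y, x) of (y, x) \<Rightarrow> (g y)\<^sup>2 * gK \<sigma> (x - y)) \<partial>lborel) = (\<integral>x. (g y)\<^sup>2 * gK \<sigma> (x - y) \<partial>lborel)"
        by (intro Bochner_Integration.integral_cong refl) (simp add: abs_mult gK_nonneg)
      also have "\<dots> = (g y)\<^sup>2" using Kone_x[OF s, of y] by simp
      finally show "(\<integral>x. norm (case (y, x) of (y, x) \<Rightarrow> (g y)\<^sup>2 * gK \<sigma> (x - y)) \<partial>lborel) = (g y)\<^sup>2" .
    qed
    then show "integrable lborel (\<lambda>y. \<integral>x. norm (case (y, x) of (y, x) \<Rightarrow> (g y)\<^sup>2 * gK \<sigma> (x - y)) \<partial>lborel)"
      using g2_int by simp
    show "AE y in lborel. integrable lborel (\<lambda>x. case (y, x) of (y, x) \<Rightarrow> (g y)\<^sup>2 * gK \<sigma> (x - y))"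
      using Kint_x[OF s] by simp
  qed
  have H2: "integrable (lborel \<Otimes>\<^sub>M lborel) (\<lambda>(x, y). (g y)\<^sup>2 * gK \<sigma> (x - y))"
    using lborel_pair.integrable_product_swap[OF H1] by (simp add: case_prod_unfold)
  define Q where "Q x = (\<integral>y. (g y)\<^sup>2 * gK \<sigma> (x - y) \<partial>lborel)" for x
  have Qi: "integrable lborel Q"
    unfolding Q_def using lborel_pair.integrable_fst'[OF H2] by simp
  have Qint: "(\<integral>x. Q x \<partial>lborel) = (\<integral>y. (g y)\<^sup>2 \<partial>lborel)"
  proof -
    have "(\<integral>x. Q x \<partial>lborel) = (\<integral>y. (\<integral>x. (g y)\<^sup>2 * gK \<sigma> (x - y) \<partial>lborel) \<partial>lborel)"
      unfolding Q_def by (rule lborel_pair.Fubini_integral[symmetric]) (use H2 in simp)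
    also have "\<dots> = (\<integral>y. (g y)\<^sup>2 \<partial>lborel)"
      by (intro Bochner_Integration.integral_cong refl) (simp add: Kone_x[OF s])
    finally show ?thesis .
  qed
  have Kint_y: "integrable lborel (\<lambda>y. gK \<sigma> (x - y))" for x by (rule gK_shift_integrable[OF s])
  have ptw: "g x * (\<integral>y. g y * gK \<sigma> (x - y) \<partial>lborel) \<le> (g x)\<^sup>2 / 2 + Q x / 2" for x
  proof -
    have i1: "integrable lborel (\<lambda>y. g x * (g y * gK \<sigma> (x - y)))"
    proof (rule Bochner_Integration.integrable_bound[OF Kint_y[of x]])
      show "(\<lambda>y. g x * (g y * gK \<sigma> (x - y))) \<in> borel_measurable lborel" by measurable
      show "AE y in lborel. norm (g x * (g y * gK \<sigma> (x - y))) \<le> norm (gK \<sigma> (x - y))"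
      proof (rule AE_I2)
        fix y
        have "\<bar>g x\<bar> * \<bar>g y\<bar> \<le> 1" using gb[of x] gb[of y] by (simp add: mult_le_one)
        then have "\<bar>g x\<bar> * \<bar>g y\<bar> * gK \<sigma> (x - y) \<le> 1 * gK \<sigma> (x - y)"
          by (rule mult_right_mono) (simp add: gK_nonneg)
        then show "norm (g x * (g y * gK \<sigma> (x - y))) \<le> norm (gK \<sigma> (x - y))"
          by (simp add: abs_mult gK_nonneg mult_ac)
      qed
    qed
    have i2': "integrable lborel (\<lambda>y. (g y)\<^sup>2 * gK \<sigma> (x - y))"
    proof (rule Bochner_Integration.integrable_bound[OF Kint_y[of x]])
      show "(\<lambda>y. (g y)\<^sup>2 * gK \<sigma> (x - y)) \<in> borel_measurable lborel" by measurable
      show "AE y in lborel. norm ((g y)\<^sup>2 * gK \<sigma> (x - y)) \<le> norm (gK \<sigma> (x - y))"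
      proof (rule AE_I2)
        fix y
        have "(g y)\<^sup>2 \<le> 1" using gb[of y] by (simp add: abs_square_le_1)
        then have "(g y)\<^sup>2 * gK \<sigma> (x - y) \<le> 1 * gK \<sigma> (x - y)"
          by (rule mult_right_mono) (simp add: gK_nonneg)
        then show "norm ((g y)\<^sup>2 * gK \<sigma> (x - y)) \<le> norm (gK \<sigma> (x - y))"
          by (simp add: abs_mult gK_nonneg)
      qed
    qed
    have "g x * (\<integral>y. g y * gK \<sigma> (x - y) \<partial>lborel) = (\<integral>y. g x * (g y * gK \<sigma> (x - y)) \<partial>lborel)"
      by simp
    also have "\<dots> \<le> (\<integral>y. (g x)\<^sup>2 / 2 * gK \<sigma> (x - y) + (g y)\<^sup>2 * gK \<sigma> (x - y) / 2 \<partial>lborel)"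
    proof (rule integral_mono[OF i1])
      show "integrable lborel (\<lambda>y. (g x)\<^sup>2 / 2 * gK \<sigma> (x - y) + (g y)\<^sup>2 * gK \<sigma> (x - y) / 2)"
        using Kint_y[of x] i2' by simp
      fix y
      have "g x * g y \<le> (g x)\<^sup>2 / 2 + (g y)\<^sup>2 / 2"
        using sum_squares_ge_zero[of "g x - g y" 0] by (simp add: power2_eq_square algebra_simps)
      then have "g x * g y * gK \<sigma> (x - y) \<le> ((g x)\<^sup>2 / 2 + (g y)\<^sup>2 / 2) * gK \<sigma> (x - y)"
        by (rule mult_right_mono) (simp add: gK_nonneg)
      then show "g x * (g y * gK \<sigma> (x - y)) \<le> (g x)\<^sup>2 / 2 * gK \<sigma> (x - y) + (g y)\<^sup>2 * gK \<sigma> (x - y) / 2"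
        by (simp add: algebra_simps)
    qed
    also have "\<dots> = (g x)\<^sup>2 / 2 * (\<integral>y. gK \<sigma> (x - y) \<partial>lborel) + Q x / 2"
      using Kint_y[of x] i2' unfolding Q_def by simp
    also have "\<dots> = (g x)\<^sup>2 / 2 + Q x / 2" by (simp add: gK_shift_integral[OF s])
    finally show ?thesis .
  qed
  have Li: "integrable lborel (\<lambda>x. g x * (\<integral>y. g y * gK \<sigma> (x - y) \<partial>lborel))"
  proof (rule Bochner_Integration.integrable_bound[OF gi])
    show "(\<lambda>x. g x * (\<integral>y. g y * gK \<sigma> (x - y) \<partial>lborel)) \<in> borel_measurable lborel" by measurable
    show "AE x in lborel. norm (g x * (\<integral>y. g y * gK \<sigma> (x - y) \<partial>lborel)) \<le> norm (g x)"
    proof (rule AE_I2)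
      fix x
      have "\<bar>\<integral>y. g y * gK \<sigma> (x - y) \<partial>lborel\<bar> \<le> (\<integral>y. \<bar>g y * gK \<sigma> (x - y)\<bar> \<partial>lborel)"
        by (rule integral_abs_bound)
      also have "\<dots> \<le> (\<integral>y. gK \<sigma> (x - y) \<partial>lborel)"
      proof (rule integral_mono[OF _ Kint_y[of x]])
        show "integrable lborel (\<lambda>y. \<bar>g y * gK \<sigma> (x - y)\<bar>)"
          by (rule integrable_abs, rule Bochner_Integration.integrable_bound[OF Kint_y[of x]])
             (use gb in \<open>auto simp: abs_mult gK_nonneg intro!: AE_I2 mult_left_le_one_le\<close>)
        fix y show "\<bar>g y * gK \<sigma> (x - y)\<bar> \<le> gK \<sigma> (x - y)"
          using gb[of y] by (auto simp: abs_mult gK_nonneg intro!: mult_left_le_one_le)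
      qed
      also have "\<dots> = 1" by (rule gK_shift_integral[OF s])
      finally have "\<bar>\<integral>y. g y * gK \<sigma> (x - y) \<partial>lborel\<bar> \<le> 1" .
      then show "norm (g x * (\<integral>y. g y * gK \<sigma> (x - y) \<partial>lborel)) \<le> norm (g x)"
        by (simp add: abs_mult mult_left_le)
    qed
  qed
  have "(\<integral>x. g x * (\<integral>y. g y * gK \<sigma> (x - y) \<partial>lborel) \<partial>lborel) \<le> (\<integral>x. (g x)\<^sup>2 / 2 + Q x / 2 \<partial>lborel)"
    by (rule integral_mono[OF Li]) (use g2_int Qi ptw in auto)
  also have "\<dots> = (\<integral>x. (g x)\<^sup>2 \<partial>lborel)"
    using g2_int Qi Qint by simp
  finally show ?thesis .
qed

lemma PP_nonneg: "0 \<le> PP g \<xi>" by (simp add: PP_def)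

lemma PP_le: "PP g \<xi> \<le> 2 * A\<^sup>2"
proof -
  have "(FC g \<xi>)\<^sup>2 \<le> A\<^sup>2" using FC_absb[of \<xi>] by (metis abs_le_square_iff abs_of_nonneg A_nonneg)
  moreover have "(FS g \<xi>)\<^sup>2 \<le> A\<^sup>2" using FS_absb[of \<xi>] by (metis abs_le_square_iff abs_of_nonneg A_nonneg)
  ultimately show ?thesis by (simp add: PP_def)
qed

lemma I3: "(\<integral>\<^sup>+\<xi>. ennreal (PP g \<xi>) \<partial>lborel) \<le> ennreal (\<integral>x. (g x)\<^sup>2 \<partial>lborel)"
proof -
  define f where "f n \<xi> = ennreal (gw (Suc n) \<xi> * PP g \<xi>)" for n \<xi>
  have inc: "incseq f"
    unfolding f_def incseq_def le_fun_def
    by (auto intro!: ennreal_leI mult_right_mono gw_mono PP_nonneg)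
  have fm: "\<And>i. f i \<in> borel_measurable lborel" unfolding f_def by measurable
  have sup: "(SUP n. f n \<xi>) = ennreal (PP g \<xi>)" for \<xi>
  proof -
    have "(\<lambda>n. \<xi> / real (Suc n)) \<longlonglongrightarrow> 0"
      using LIMSEQ_Suc[OF lim_const_over_n[of \<xi>]] by simp
    then have "(\<lambda>n. gw (Suc n) \<xi>) \<longlonglongrightarrow> exp (- ((0::real)\<^sup>2 / 2))"
      unfolding gw_def by (intro tendsto_intros) auto
    then have "(\<lambda>n. gw (Suc n) \<xi> * PP g \<xi>) \<longlonglongrightarrow> 1 * PP g \<xi>"
      by (intro tendsto_intros) simp
    then have "(\<lambda>n. f n \<xi>) \<longlonglongrightarrow> ennreal (PP g \<xi>)"
      unfolding f_def by (intro tendsto_ennrealI) simp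
    moreover have "(\<lambda>n. f n \<xi>) \<longlonglongrightarrow> (SUP n. f n \<xi>)"
      by (rule LIMSEQ_SUP) (use inc in \<open>auto simp: incseq_def le_fun_def\<close>)
    ultimately show ?thesis using LIMSEQ_unique by blast
  qed
  have each: "integral\<^sup>N lborel (f n) \<le> ennreal (\<integral>x. (g x)\<^sup>2 \<partial>lborel)" for n
  proof -
    have s: "0 < real (Suc n)" by simp
    have ii: "integrable lborel (\<lambda>\<xi>. gw (Suc n) \<xi> * PP g \<xi>)"
    proof (rule Bochner_Integration.integrable_bound[OF integrable_mult_left[OF gw_integrable[OF s], of "2 * A\<^sup>2"]])
      show "(\<lambda>\<xi>. gw (Suc n) \<xi> * PP g \<xi>) \<in> borel_measurable lborel" by measurable
      show "AE x in lborel. norm (gw (Suc n) x * PP g x) \<le> norm (gw (real (Suc n)) x * (2 * A\<^sup>2))"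
        using PP_le PP_nonneg gw_nonneg by (auto intro!: AE_I2 mult_left_mono simp: abs_mult)
    qed
    have "integral\<^sup>N lborel (f n) = ennreal (\<integral>\<xi>. gw (Suc n) \<xi> * PP g \<xi> \<partial>lborel)"
      unfolding f_def by (rule nn_integral_eq_integral[OF ii]) (auto simp: PP_nonneg gw_nonneg)
    also have "\<dots> \<le> ennreal (\<integral>x. (g x)\<^sup>2 \<partial>lborel)"
      using I1[OF s] I2[OF s] by (intro ennreal_leI) simp
    finally show ?thesis .
  qed
  have "(\<integral>\<^sup>+\<xi>. ennreal (PP g \<xi>) \<partial>lborel) = (\<integral>\<^sup>+\<xi>. (SUP n. f n \<xi>) \<partial>lborel)"
    by (simp add: sup)
  also have "\<dots> = (SUP n. integral\<^sup>N lborel (f n))"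
    by (rule nn_integral_monotone_convergence_SUP[OF inc fm])
  also have "\<dots> \<le> ennreal (\<integral>x. (g x)\<^sup>2 \<partial>lborel)"
    by (rule SUP_least) (rule each)
  finally show ?thesis .
qed

end


lemma ennreal_sum_swap:
  fixes f :: "nat \<Rightarrow> nat \<Rightarrow> ennreal"
  shows "(\<Sum>n. \<Sum>k. f n k) = (\<Sum>k. \<Sum>n. f n k)"
proof -
  have "(\<Sum>n. \<Sum>k. f n k) = (\<integral>\<^sup>+n. (\<Sum>k. f n k) \<partial>count_space UNIV)"
    by (simp add: nn_integral_count_space_nat)
  also have "\<dots> = (\<Sum>k. \<integral>\<^sup>+n. f n k \<partial>count_space UNIV)"
    by (rule nn_integral_suminf) simp
  also have "\<dots> = (\<Sum>k. \<Sum>n. f n k)"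
    by (simp add: nn_integral_count_space_nat)
  finally show ?thesis .
qed

lemma pow2_bracket:
  fixes x :: real assumes "1 \<le> x"
  shows "\<exists>n. 2 ^ n \<le> x \<and> x < 2 ^ Suc n"
proof -
  obtain n0 where n0: "x < 2 ^ n0" using real_arch_pow[of 2 x] by auto
  have "(2::real) ^ n0 \<le> 2 ^ Suc n0" by simp
  then have ex: "\<exists>n. x < 2 ^ Suc n" using n0 by (meson less_le_trans)
  define n where "n = (LEAST n. x < 2 ^ Suc n)"
  have n1: "x < 2 ^ Suc n" unfolding n_def by (rule LeastI_ex[OF ex])
  have n2: "2 ^ n \<le> x"
  proof (cases n)
    case 0 then show ?thesis using assms by simp
  next
    case (Suc m)
    have "m < n" using Suc by simp
    then have "\<not> x < 2 ^ Suc m" unfolding n_def by (rule not_less_Least)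
    then show ?thesis using Suc by (simp only: not_less)
  qed
  show ?thesis using n1 n2 by blast
qed

lemma weight_ineq:
  fixes s \<xi> :: real
  assumes s: "0 < s" "s \<le> 1"
  shows "\<exists>n. (1 + \<xi>\<^sup>2) powr s \<le> 2 + 9 * (2 powr (2 * s * real n) * (2 - 2 * cos (2 * pi * (1 / 2 ^ n) * \<xi>)))"
proof (cases "\<bar>\<xi>\<bar> < 1/4")
  case True
  have "(1 + \<xi>\<^sup>2) powr s \<le> (1 + \<xi>\<^sup>2) powr 1"
    by (rule powr_mono) (use s in auto)
  also have "\<dots> \<le> 2"
  proof -
    have "\<xi>\<^sup>2 \<le> 1" using True by (simp add: abs_square_le_1)
    then show ?thesis by simp
  qed
  finally have "(1 + \<xi>\<^sup>2) powr s \<le> 2" .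
  moreover have "0 \<le> 9 * (2 powr (2 * s * real 0) * (2 - 2 * cos (2 * pi * (1 / 2 ^ 0) * \<xi>)))"
    by simp
  ultimately show ?thesis by (intro exI[of _ 0]) linarith
next
  case False
  then have "1 \<le> 4 * \<bar>\<xi>\<bar>" by simp
  then obtain n where n: "2 ^ n \<le> 4 * \<bar>\<xi>\<bar>" "4 * \<bar>\<xi>\<bar> < 2 ^ Suc n" using pow2_bracket by blast
  define t where "t = \<bar>\<xi>\<bar> / 2 ^ n"
  have t1: "1/4 \<le> t" using n(1) unfolding t_def by (simp add: field_simps)
  have t2: "t < 1/2" using n(2) unfolding t_def by (simp add: field_simps)
  have ct: "cos (2 * pi * (1 / 2 ^ n) * \<xi>) = cos (2 * pi * t)"
  proof -
    have "\<bar>2 * pi * (1 / 2 ^ n) * \<xi>\<bar> = 2 * pi * (1 / 2 ^ n) * \<bar>\<xi>\<bar>"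
      by (simp add: abs_mult)
    then have "cos (2 * pi * (1 / 2 ^ n) * \<xi>) = cos (2 * pi * (1 / 2 ^ n) * \<bar>\<xi>\<bar>)"
      by (metis cos_abs_real)
    then show ?thesis unfolding t_def by simp
  qed
  have "0 \<le> cos (pi - 2 * pi * t)"
    by (rule cos_ge_zero) (use t1 t2 pi_gt_zero in \<open>auto simp: field_simps\<close>)
  then have "cos (2 * pi * t) \<le> 0" by simp
  then have w2: "2 \<le> 2 - 2 * cos (2 * pi * (1 / 2 ^ n) * \<xi>)" unfolding ct by simp
  have "(1 + \<xi>\<^sup>2) powr s \<le> (17 * \<bar>\<xi>\<bar>\<^sup>2) powr s"
  proof (rule powr_mono2)
    have "1 \<le> (4 * \<bar>\<xi>\<bar>)\<^sup>2" by (rule one_le_power) (use \<open>1 \<le> 4 * \<bar>\<xi>\<bar>\<close> in simp)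
    then show "1 + \<xi>\<^sup>2 \<le> 17 * \<bar>\<xi>\<bar>\<^sup>2" by (simp add: power_mult_distrib)
  qed (use s in auto)
  also have "\<dots> = 17 powr s * \<bar>\<xi>\<bar> powr (2 * s)"
  proof -
    have xi: "0 < \<bar>\<xi>\<bar>" using \<open>1 \<le> 4 * \<bar>\<xi>\<bar>\<close> by linarith
    have "\<bar>\<xi>\<bar>\<^sup>2 = \<bar>\<xi>\<bar> powr (real 2)" by (rule powr_realpow[OF xi, symmetric])
    then have "(\<bar>\<xi>\<bar>\<^sup>2) powr s = \<bar>\<xi>\<bar> powr (2 * s)" by (simp only: powr_powr) simp
    then show ?thesis by (simp add: powr_mult)
  qed
  also have "\<dots> \<le> 17 * (2 ^ n) powr (2 * s)"
  proof (rule mult_mono)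
    show "17 powr s \<le> 17" using powr_mono[of s 1 17] s by simp
    have xn: "\<bar>\<xi>\<bar> \<le> 2 ^ n" using n(2) by simp
    show "\<bar>\<xi>\<bar> powr (2 * s) \<le> (2 ^ n) powr (2 * s)"
      by (rule powr_mono2[OF _ _ xn]) (use s in auto)
  qed auto
  also have "((2::real) ^ n) powr (2 * s) = 2 powr (2 * s * real n)"
  proof -
    have "(2::real) ^ n = 2 powr real n" by (simp add: powr_realpow)
    then show ?thesis by (simp add: powr_powr mult_ac)
  qed
  finally have "(1 + \<xi>\<^sup>2) powr s \<le> 17 * 2 powr (2 * s * real n)" .
  also have "\<dots> \<le> 9 * (2 powr (2 * s * real n) * 2)" by simp
  also have "\<dots> \<le> 9 * (2 powr (2 * s * real n) * (2 - 2 * cos (2 * pi * (1 / 2 ^ n) * \<xi>)))"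
    using w2 by (intro mult_left_mono) auto
  finally show ?thesis by (intro exI[of _ n]) linarith
qed


lemma disc_sum:
  fixes s G :: real
  assumes s: "0 < s" "s < 1/2" and G: "0 < G"
  shows "(\<Sum>n. ennreal (2 powr (2 * s * real n) * min G (2 / 2 ^ n)))
     \<le> ennreal ((4 / (2 powr (2 * s) - 1) + 2 / (1 - 2 powr (2 * s - 1))) * G powr (1 - 2 * s))"
proof -
  define q where "q = (2::real) powr (2 * s)"
  define r where "r = (2::real) powr (2 * s - 1)"
  define t where "t n = 2 powr (2 * s * real n) * min G (2 / 2 ^ n)" for n
  have q1: "1 < q" unfolding q_def using s by simp
  have r0: "0 < r" and r1: "r < 1" unfolding r_def using s by (auto intro: powr_less_one)
  have rq: "r = q / 2" unfolding r_def q_def by (simp add: powr_diff)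
  have qn: "2 powr (2 * s * real n) = q ^ n" for n
  proof -
    have "q ^ n = q powr real n" using q1 by (simp add: powr_realpow)
    also have "\<dots> = 2 powr (2 * s * real n)" unfolding q_def by (simp add: powr_powr)
    finally show ?thesis ..
  qed
  have t_nonneg: "0 \<le> t n" for n unfolding t_def using G by simp
  have t_le: "t n \<le> 2 * r ^ n" for n
  proof -
    have "t n \<le> q ^ n * (2 / 2 ^ n)" unfolding t_def qn
      by (intro mult_left_mono) (use q1 in auto)
    also have "\<dots> = 2 * r ^ n" unfolding rq by (simp add: power_divide)
    finally show ?thesis .
  qed
  have t_le2: "t n \<le> q ^ n * G" for n
    unfolding t_def qn by (intro mult_left_mono) (use q1 in auto)
  have sr: "summable (\<lambda>n. 2 * r ^ n)" using r0 r1 by (intro summable_mult summable_geometric) simp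
  have st: "summable t"
    by (rule summable_comparison_test'[OF sr]) (use t_le t_nonneg in auto)
  have ex: "\<exists>N. 2 / 2 ^ N < G"
  proof -
    obtain N where "2 / G < 2 ^ N" using real_arch_pow[of 2 "2 / G"] by auto
    then have "2 / 2 ^ N < G" using G by (simp add: field_simps)
    then show ?thesis by blast
  qed
  define N where "N = (LEAST N. 2 / 2 ^ N < G)"
  have N1: "2 / 2 ^ N < G" unfolding N_def by (rule LeastI_ex[OF ex])
  define C where "C = G powr (1 - 2 * s)"
  have C0: "0 \<le> C" unfolding C_def by simp
  have part1: "(\<Sum>n<N. t n) \<le> 4 / (q - 1) * C"
  proof (cases N)
    case 0 then show ?thesis using C0 q1 by simp
  next
    case (Suc M)
    have "M < N" using Suc by simp
    then have "\<not> 2 / 2 ^ M < G" unfolding N_def by (rule not_less_Least)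
    then have "G \<le> 4 / 2 ^ N" using Suc by simp
    then have "2 ^ N \<le> 4 / G" using G by (simp add: field_simps)
    then have "(2 ^ N) powr (2 * s) \<le> (4 / G) powr (2 * s)"
      by (rule powr_mono2[rotated 2]) (use s in auto)
    moreover have "(2 ^ N) powr (2 * s) = q ^ N" using qn[of N] by (simp add: powr_realpow[symmetric] powr_powr mult_ac)
    ultimately have qN: "q ^ N \<le> 4 powr (2 * s) / G powr (2 * s)" using G by (simp add: powr_divide)
    have "4 powr (2 * s) \<le> (4::real) powr 1" by (rule powr_mono) (use s in auto)
    then have f4: "4 powr (2 * s) \<le> (4::real)" by simp
    have GG: "G / G powr (2 * s) = C" unfolding C_def using G by (simp add: powr_diff)
    have "(\<Sum>n<N. t n) \<le> (\<Sum>n<N. q ^ n * G)" by (intro sum_mono t_le2)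
    also have "\<dots> = (\<Sum>n<N. q ^ n) * G" by (rule sum_distrib_right[symmetric])
    also have "(\<Sum>n<N. q ^ n) = (1 - q ^ N) / (1 - q)" using q1 by (simp add: sum_gp_strict)
    also have "(1 - q ^ N) / (1 - q) * G = G * ((q ^ N - 1) / (q - 1))"
      using q1 by (simp add: field_simps)
    also have "\<dots> \<le> G * (q ^ N / (q - 1))"
      using G q1 by (intro mult_left_mono divide_right_mono) auto
    also have "\<dots> \<le> G * ((4 powr (2 * s) / G powr (2 * s)) / (q - 1))"
      using G q1 qN by (intro mult_left_mono divide_right_mono) auto
    also have "\<dots> = 4 powr (2 * s) / (q - 1) * C"
    proof -
      have Gp: "0 < G powr (2 * s)" using G by simp
      show ?thesis unfolding GG[symmetric] using Gp q1 by (simp add: field_simps)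
    qed
    also have "\<dots> \<le> 4 / (q - 1) * C"
      using f4 q1 C0 by (intro mult_right_mono divide_right_mono) auto
    finally show ?thesis .
  qed
  have part2: "(\<Sum>n. t (n + N)) \<le> 2 / (1 - r) * C"
  proof -
    have rN: "r ^ N \<le> C"
    proof -
      have "r ^ N = (1 / 2 ^ N) powr (1 - 2 * s)"
      proof -
        have "r ^ N = r powr real N" using r0 by (simp add: powr_realpow)
        also have "\<dots> = (2 powr real N) powr (2 * s - 1)" unfolding r_def by (simp add: powr_powr mult_ac)
        also have "\<dots> = (2 ^ N) powr (2 * s - 1)" by (simp add: powr_realpow)
        also have "\<dots> = (1 / 2 ^ N) powr (1 - 2 * s)"
          by (simp add: powr_divide powr_minus_divide[symmetric] powr_minus)
        finally show ?thesis .
      qed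
      also have "\<dots> \<le> G powr (1 - 2 * s)"
        by (rule powr_mono2) (use s N1 G in auto)
      finally show ?thesis unfolding C_def .
    qed
    have s2: "summable (\<lambda>n. 2 * r ^ N * r ^ n)" using r0 r1 by (intro summable_mult summable_geometric) simp
    have "(\<Sum>n. t (n + N)) \<le> (\<Sum>n. 2 * r ^ N * r ^ n)"
    proof (rule suminf_le)
      show "summable (\<lambda>n. t (n + N))" using st by (simp add: summable_iff_shift)
      show "t (n + N) \<le> 2 * r ^ N * r ^ n" for n using t_le[of "n + N"] by (simp add: power_add mult_ac)
    qed (rule s2)
    also have "\<dots> = 2 * r ^ N / (1 - r)"
      using r0 r1 by (simp add: suminf_mult suminf_geometric)
    also have "\<dots> \<le> 2 * C / (1 - r)" using rN r1 by (intro divide_right_mono) auto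
    finally show ?thesis by simp
  qed
  have "(\<Sum>n. ennreal (t n)) = ennreal (\<Sum>n. t n)" by (rule suminf_ennreal2[OF t_nonneg st])
  also have "(\<Sum>n. t n) = (\<Sum>n. t (n + N)) + (\<Sum>n<N. t n)" by (rule suminf_split_initial_segment[OF st])
  also have "\<dots> \<le> (4 / (q - 1) + 2 / (1 - r)) * C" using part1 part2 by (simp add: algebra_simps)
  finally show ?thesis unfolding t_def q_def r_def C_def by (simp add: ennreal_leI)
qed


context cantor begin

abbreviation "ff \<equiv> (indicator (cantor_set l) :: real \<Rightarrow> real)"

definition gh :: "real \<Rightarrow> real \<Rightarrow> real" where
  "gh h x = ff x - ff (x - h)"

lemma ff_meas[measurable]: "ff \<in> borel_measurable borel"
  by measurable

lemma gh_meas[measurable]: "gh h \<in> borel_measurable borel"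
  unfolding gh_def by measurable

lemma emeasure_E: "emeasure lborel (cantor_set l) \<le> 1"
proof -
  have "emeasure lborel (cantor_set l) \<le> emeasure lborel {0..1::real}"
    by (intro emeasure_mono E_sub) simp
  then show ?thesis by simp
qed

lemma ff_int: "integrable lborel ff"
proof (rule integrable_real_indicator)
  show "emeasure lborel (cantor_set l) < \<infinity>"
    using emeasure_E by (rule le_less_trans) simp
qed simp

lemma plg_ff: "plg ff"
  by unfold_locales (auto simp: ff_int)

lemma gh_int: "integrable lborel (gh h)"
proof -
  have "integrable lborel (\<lambda>x. ff (x - h))"
    using lborel_integrable_real_affine[OF ff_int, of 1 "-h"] by simp
  then show ?thesis unfolding gh_def using ff_int by simp
qed

lemma plg_gh: "plg (gh h)"
  by unfold_locales (auto simp: gh_int gh_def indicator_def)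

lemma gh_sq_bound:
  assumes h: "0 \<le> h"
  shows "ennreal ((gh h x)\<^sup>2) \<le> indicator (Sset h) x + indicator (Sset h) (x - h)"
proof (cases "x \<in> cantor_set l \<longleftrightarrow> x - h \<in> cantor_set l")
  case True then show ?thesis by (auto simp: gh_def indicator_def)
next
  case False
  then consider "x \<in> cantor_set l" "x - h \<notin> cantor_set l" | "x \<notin> cantor_set l" "x - h \<in> cantor_set l" by blast
  then show ?thesis
  proof cases
    case 1
    have "x - h \<in> Sset h" by (rule bad_sub[OF 1(2) 1(1)]) (use h in simp)
    then show ?thesis using 1 by (simp add: gh_def indicator_def)
  next
    case 2
    have "x \<in> Sset h" by (rule bad_sub[OF 2(1) 2(2)]) (use h in simp)
    then show ?thesis using 2 by (simp add: gh_def indicator_def)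
  qed
qed

lemma gh_L2:
  assumes h: "0 \<le> h"
  shows "ennreal (\<integral>x. (gh h x)\<^sup>2 \<partial>lborel) \<le> 2 * emeasure lborel (Sset h)"
proof -
  interpret G: plg "gh h" by (rule plg_gh)
  have "ennreal (\<integral>x. (gh h x)\<^sup>2 \<partial>lborel) = (\<integral>\<^sup>+x. ennreal ((gh h x)\<^sup>2) \<partial>lborel)"
    by (rule nn_integral_eq_integral[symmetric]) (use G.g2_int in auto)
  also have "\<dots> \<le> (\<integral>\<^sup>+x. (indicator (Sset h) x + indicator (Sset h) (x - h)) \<partial>lborel)"
    by (intro nn_integral_mono gh_sq_bound h)
  also have "\<dots> = (\<integral>\<^sup>+x. indicator (Sset h) x \<partial>lborel) + (\<integral>\<^sup>+x. indicator (Sset h) (x - h) \<partial>lborel)"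
    by (rule nn_integral_add) auto
  also have "(\<integral>\<^sup>+x. indicator (Sset h) (x - h) \<partial>lborel) = (\<integral>\<^sup>+x. indicator (Sset h) x \<partial>lborel)"
    using nn_integral_real_affine[of "indicator (Sset h) :: real \<Rightarrow> ennreal" 1 "-h"] by simp
  also have "(\<integral>\<^sup>+x. indicator (Sset h) x \<partial>lborel) = emeasure lborel (Sset h)"
    by simp
  finally show ?thesis by (simp add: mult_2)
qed

lemma PP_gh_bound:
  assumes h: "0 \<le> h"
  shows "(\<integral>\<^sup>+\<xi>. ennreal (PP (gh h) \<xi>) \<partial>lborel)
     \<le> 2 * (ennreal (2 * h) + (\<Sum>k. ennreal (2 ^ k * min (gap l (Suc k)) (2 * h))))"
proof -
  interpret G: plg "gh h" by (rule plg_gh)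
  have "(\<integral>\<^sup>+\<xi>. ennreal (PP (gh h) \<xi>) \<partial>lborel) \<le> ennreal (\<integral>x. (gh h x)\<^sup>2 \<partial>lborel)"
    by (rule G.I3)
  also have "\<dots> \<le> 2 * emeasure lborel (Sset h)" by (rule gh_L2[OF h])
  also have "\<dots> \<le> 2 * (ennreal (2 * h) + (\<Sum>k. ennreal (2 ^ k * min (gap l (Suc k)) (2 * h))))"
    by (intro mult_left_mono emeasure_Sset h) simp
  finally show ?thesis .
qed

lemma PP_gh: "PP (gh h) \<xi> = (2 - 2 * cos (2 * pi * h * \<xi>)) * PP ff \<xi>"
  unfolding gh_def by (rule PP_diff_shift[OF ff_int])

end


context cantor begin

lemma gapS_pos: "0 < gap l (Suc k)"
  using lS[of k] by (simp add: gap_Suc)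

lemma sob_nonpos:
  assumes s: "s \<le> 0"
  shows "in_sobolev s ff"
proof -
  interpret F: plg ff by (rule plg_ff)
  have "(\<integral>\<^sup>+\<xi>. ennreal ((1 + \<xi>\<^sup>2) powr s * (cmod (fourier ff \<xi>))\<^sup>2) \<partial>lborel)
      \<le> (\<integral>\<^sup>+\<xi>. ennreal (PP ff \<xi>) \<partial>lborel)"
  proof (rule nn_integral_mono)
    fix \<xi> :: real
    have "(1 + \<xi>\<^sup>2) powr s \<le> (1 + \<xi>\<^sup>2) powr 0" by (rule powr_mono) (use s in auto)
    moreover have "0 < 1 + \<xi>\<^sup>2" by (simp add: add_pos_nonneg)
    ultimately have "(1 + \<xi>\<^sup>2) powr s \<le> 1" by simp
    then have "(1 + \<xi>\<^sup>2) powr s * PP ff \<xi> \<le> 1 * PP ff \<xi>"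
      by (rule mult_right_mono) (rule F.PP_nonneg)
    then show "ennreal ((1 + \<xi>\<^sup>2) powr s * (cmod (fourier ff \<xi>))\<^sup>2) \<le> ennreal (PP ff \<xi>)"
      by (simp add: fourier_cmod[OF ff_int] ennreal_leI)
  qed
  also have "\<dots> \<le> ennreal (\<integral>x. (ff x)\<^sup>2 \<partial>lborel)" by (rule F.I3)
  also have "\<dots> < \<infinity>" by simp
  finally show ?thesis unfolding in_sobolev_def using ff_int by simp
qed

lemma sob_pos:
  assumes s: "0 < s" "s < 1/2"
    and sm: "summable (\<lambda>k. 2 ^ k * gap l (Suc k) powr (1 - 2 * s))"
  shows "in_sobolev s ff"
proof -
  interpret F: plg ff by (rule plg_ff)
  define K where "K = 4 / (2 powr (2 * s) - 1) + 2 / (1 - 2 powr (2 * s - 1))"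
  define c where "c n = 9 * 2 powr (2 * s * real n)" for n :: nat
  define hh where "hh n = (1::real) / 2 ^ n" for n :: nat
  have c0: "0 \<le> c n" for n unfolding c_def by simp
  have hh0: "0 \<le> hh n" for n unfolding hh_def by simp
  have ptw: "ennreal ((1 + \<xi>\<^sup>2) powr s * (cmod (fourier ff \<xi>))\<^sup>2)
      \<le> ennreal (2 * PP ff \<xi>) + (\<Sum>n. ennreal (c n) * ennreal (PP (gh (hh n)) \<xi>))" for \<xi>
  proof -
    obtain n where n: "(1 + \<xi>\<^sup>2) powr s \<le> 2 + 9 * (2 powr (2 * s * real n) * (2 - 2 * cos (2 * pi * (1 / 2 ^ n) * \<xi>)))"
      using weight_ineq[of s \<xi>] s by auto
    have P0: "0 \<le> PP ff \<xi>" by (rule F.PP_nonneg)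
    have "(1 + \<xi>\<^sup>2) powr s * PP ff \<xi> \<le> (2 + 9 * (2 powr (2 * s * real n) * (2 - 2 * cos (2 * pi * (1 / 2 ^ n) * \<xi>)))) * PP ff \<xi>"
      by (rule mult_right_mono[OF n P0])
    also have "\<dots> = 2 * PP ff \<xi> + c n * PP (gh (hh n)) \<xi>"
      unfolding PP_gh c_def hh_def by (simp add: algebra_simps)
    finally have r: "(1 + \<xi>\<^sup>2) powr s * PP ff \<xi> \<le> 2 * PP ff \<xi> + c n * PP (gh (hh n)) \<xi>" .
    have PPg0: "0 \<le> PP (gh (hh n)) \<xi>" by (simp add: PP_def)
    have "ennreal ((1 + \<xi>\<^sup>2) powr s * (cmod (fourier ff \<xi>))\<^sup>2) = ennreal ((1 + \<xi>\<^sup>2) powr s * PP ff \<xi>)"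
      by (simp add: fourier_cmod[OF ff_int])
    also have "\<dots> \<le> ennreal (2 * PP ff \<xi> + c n * PP (gh (hh n)) \<xi>)" by (rule ennreal_leI[OF r])
    also have "\<dots> = ennreal (2 * PP ff \<xi>) + ennreal (c n) * ennreal (PP (gh (hh n)) \<xi>)"
      using P0 PPg0 c0[of n] by (simp add: ennreal_plus ennreal_mult)
    also have "ennreal (c n) * ennreal (PP (gh (hh n)) \<xi>) \<le> (\<Sum>m. ennreal (c m) * ennreal (PP (gh (hh m)) \<xi>))"
      using sum_le_suminf[OF summableI, of "{n}" "\<lambda>m. ennreal (c m) * ennreal (PP (gh (hh m)) \<xi>)"] by simp
    finally show ?thesis by (simp add: add_left_mono)
  qed
  define a where "a n = 18 * (2 powr (2 * s * real n) * min 2 (2 / 2 ^ n))" for n :: nat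
  define b where "b n k = 18 * 2 ^ k * (2 powr (2 * s * real n) * min (gap l (Suc k)) (2 / 2 ^ n))" for n k :: nat
  have a0: "0 \<le> a n" for n unfolding a_def by simp
  have b0: "0 \<le> b n k" for n k unfolding b_def using gapS_pos[of k] by simp
  have per_n: "ennreal (c n) * (\<integral>\<^sup>+\<xi>. ennreal (PP (gh (hh n)) \<xi>) \<partial>lborel) \<le> ennreal (a n) + (\<Sum>k. ennreal (b n k))" for n
  proof -
    have "ennreal (c n) * (\<integral>\<^sup>+\<xi>. ennreal (PP (gh (hh n)) \<xi>) \<partial>lborel)
        \<le> ennreal (c n) * (2 * (ennreal (2 * hh n) + (\<Sum>k. ennreal (2 ^ k * min (gap l (Suc k)) (2 * hh n)))))"
      by (intro mult_left_mono PP_gh_bound hh0) simp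
    also have "\<dots> = ennreal (2 * c n) * ennreal (2 * hh n) + (\<Sum>k. ennreal (2 * c n) * ennreal (2 ^ k * min (gap l (Suc k)) (2 * hh n)))"
    proof -
      have e2: "ennreal (2 * c n) = 2 * ennreal (c n)" using c0[of n] by (simp add: ennreal_mult)
      show ?thesis by (simp only: e2 ennreal_suminf_cmult) (simp add: algebra_simps)
    qed
    also have "ennreal (2 * c n) * ennreal (2 * hh n) = ennreal (a n)"
    proof -
      have "2 / 2 ^ n \<le> (2::real)" by (simp add: field_simps)
      then have "min 2 (2 / 2 ^ n) = (2 / 2 ^ n :: real)" by simp
      then show ?thesis using c0[of n] hh0[of n] unfolding a_def c_def hh_def
        by (simp add: ennreal_mult[symmetric] mult_ac)
    qed
    also have "(\<lambda>k. ennreal (2 * c n) * ennreal (2 ^ k * min (gap l (Suc k)) (2 * hh n))) = (\<lambda>k. ennreal (b n k))"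
    proof
      fix k
      show "ennreal (2 * c n) * ennreal (2 ^ k * min (gap l (Suc k)) (2 * hh n)) = ennreal (b n k)"
        using c0[of n] hh0[of n] gapS_pos[of k] unfolding b_def c_def hh_def
        by (simp add: ennreal_mult[symmetric] mult_ac)
    qed
    finally show ?thesis .
  qed
  have K0: "0 \<le> K"
  proof -
    have "1 < (2::real) powr (2 * s)" using s by simp
    moreover have "(2::real) powr (2 * s - 1) < 1" using s by (intro powr_less_one) auto
    ultimately show ?thesis unfolding K_def by simp
  qed
  have sumA: "(\<Sum>n. ennreal (a n)) \<le> ennreal (18 * (K * 2 powr (1 - 2 * s)))"
  proof -
    have "(\<Sum>n. ennreal (a n)) = ennreal 18 * (\<Sum>n. ennreal (2 powr (2 * s * real n) * min 2 (2 / 2 ^ n)))"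
    proof -
      have "(\<lambda>n. ennreal (a n)) = (\<lambda>n. ennreal 18 * ennreal (2 powr (2 * s * real n) * min 2 (2 / 2 ^ n)))"
        by (rule ext) (simp add: a_def ennreal_mult)
      then show ?thesis by (simp only: ennreal_suminf_cmult)
    qed
    also have "\<dots> \<le> ennreal 18 * ennreal (K * 2 powr (1 - 2 * s))"
      unfolding K_def by (intro mult_left_mono disc_sum) (use s in auto)
    also have "\<dots> = ennreal (18 * (K * 2 powr (1 - 2 * s)))" using K0 by (simp add: ennreal_mult)
    finally show ?thesis .
  qed
  have sumB: "(\<Sum>n. \<Sum>k. ennreal (b n k)) \<le> ennreal (\<Sum>k. 18 * K * (2 ^ k * gap l (Suc k) powr (1 - 2 * s)))"
  proof -
    have "(\<Sum>n. \<Sum>k. ennreal (b n k)) = (\<Sum>k. \<Sum>n. ennreal (b n k))" by (rule ennreal_sum_swap)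
    also have "\<dots> \<le> (\<Sum>k. ennreal (18 * K * (2 ^ k * gap l (Suc k) powr (1 - 2 * s))))"
    proof (rule suminf_le)
      fix k
      have "(\<Sum>n. ennreal (b n k)) = ennreal (18 * 2 ^ k) * (\<Sum>n. ennreal (2 powr (2 * s * real n) * min (gap l (Suc k)) (2 / 2 ^ n)))"
      proof -
        have "(\<lambda>n. ennreal (b n k)) = (\<lambda>n. ennreal (18 * 2 ^ k) * ennreal (2 powr (2 * s * real n) * min (gap l (Suc k)) (2 / 2 ^ n)))"
          by (rule ext) (use gapS_pos[of k] in \<open>simp add: b_def ennreal_mult mult.assoc\<close>)
        then show ?thesis by (simp only: ennreal_suminf_cmult)
      qed
      also have "\<dots> \<le> ennreal (18 * 2 ^ k) * ennreal (K * gap l (Suc k) powr (1 - 2 * s))"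
        unfolding K_def by (intro mult_left_mono disc_sum gapS_pos) (use s in auto)
      also have "\<dots> = ennreal (18 * K * (2 ^ k * gap l (Suc k) powr (1 - 2 * s)))"
        using K0 by (simp add: ennreal_mult[symmetric] mult_ac)
      finally show "(\<Sum>n. ennreal (b n k)) \<le> ennreal (18 * K * (2 ^ k * gap l (Suc k) powr (1 - 2 * s)))" .
    qed auto
    also have "\<dots> = ennreal (\<Sum>k. 18 * K * (2 ^ k * gap l (Suc k) powr (1 - 2 * s)))"
      by (rule suminf_ennreal2) (use K0 sm in auto)
    finally show ?thesis .
  qed
  have I2P: "(\<integral>\<^sup>+\<xi>. ennreal (2 * PP ff \<xi>) \<partial>lborel) \<le> 2 * ennreal (\<integral>x. (ff x)\<^sup>2 \<partial>lborel)"
  proof -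
    have "(\<integral>\<^sup>+\<xi>. ennreal (2 * PP ff \<xi>) \<partial>lborel) = 2 * (\<integral>\<^sup>+\<xi>. ennreal (PP ff \<xi>) \<partial>lborel)"
      by (subst nn_integral_cmult[symmetric]) (auto simp: ennreal_mult F.PP_nonneg)
    also have "\<dots> \<le> 2 * ennreal (\<integral>x. (ff x)\<^sup>2 \<partial>lborel)" by (intro mult_left_mono F.I3) simp
    finally show ?thesis .
  qed
  have SS: "(\<Sum>n. ennreal (c n) * (\<integral>\<^sup>+\<xi>. ennreal (PP (gh (hh n)) \<xi>) \<partial>lborel))
      \<le> ennreal (18 * (K * 2 powr (1 - 2 * s))) + ennreal (\<Sum>k. 18 * K * (2 ^ k * gap l (Suc k) powr (1 - 2 * s)))"
  proof -
    have "(\<Sum>n. ennreal (c n) * (\<integral>\<^sup>+\<xi>. ennreal (PP (gh (hh n)) \<xi>) \<partial>lborel))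
        \<le> (\<Sum>n. ennreal (a n) + (\<Sum>k. ennreal (b n k)))"
      by (intro suminf_le per_n) auto
    also have "\<dots> = (\<Sum>n. ennreal (a n)) + (\<Sum>n. \<Sum>k. ennreal (b n k))"
      by (rule suminf_add[symmetric]) auto
    also have "\<dots> \<le> ennreal (18 * (K * 2 powr (1 - 2 * s))) + ennreal (\<Sum>k. 18 * K * (2 ^ k * gap l (Suc k) powr (1 - 2 * s)))"
      by (intro add_mono sumA sumB)
    finally show ?thesis .
  qed
  have "(\<integral>\<^sup>+\<xi>. ennreal ((1 + \<xi>\<^sup>2) powr s * (cmod (fourier ff \<xi>))\<^sup>2) \<partial>lborel)
      \<le> (\<integral>\<^sup>+\<xi>. ennreal (2 * PP ff \<xi>) + (\<Sum>n. ennreal (c n) * ennreal (PP (gh (hh n)) \<xi>)) \<partial>lborel)"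
    by (rule nn_integral_mono) (rule ptw)
  also have "\<dots> = (\<integral>\<^sup>+\<xi>. ennreal (2 * PP ff \<xi>) \<partial>lborel) + (\<integral>\<^sup>+\<xi>. (\<Sum>n. ennreal (c n) * ennreal (PP (gh (hh n)) \<xi>)) \<partial>lborel)"
    by (rule nn_integral_add) auto
  also have "(\<integral>\<^sup>+\<xi>. (\<Sum>n. ennreal (c n) * ennreal (PP (gh (hh n)) \<xi>)) \<partial>lborel)
      = (\<Sum>n. ennreal (c n) * (\<integral>\<^sup>+\<xi>. ennreal (PP (gh (hh n)) \<xi>) \<partial>lborel))"
    by (subst nn_integral_suminf) (auto intro!: suminf_cong nn_integral_cmult)
  finally have fin0: "(\<integral>\<^sup>+\<xi>. ennreal ((1 + \<xi>\<^sup>2) powr s * (cmod (fourier ff \<xi>))\<^sup>2) \<partial>lborel)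
      \<le> (\<integral>\<^sup>+\<xi>. ennreal (2 * PP ff \<xi>) \<partial>lborel) + (\<Sum>n. ennreal (c n) * (\<integral>\<^sup>+\<xi>. ennreal (PP (gh (hh n)) \<xi>) \<partial>lborel))" .
  have fin: "(\<integral>\<^sup>+\<xi>. ennreal ((1 + \<xi>\<^sup>2) powr s * (cmod (fourier ff \<xi>))\<^sup>2) \<partial>lborel)
      \<le> 2 * ennreal (\<integral>x. (ff x)\<^sup>2 \<partial>lborel) + (ennreal (18 * (K * 2 powr (1 - 2 * s))) + ennreal (\<Sum>k. 18 * K * (2 ^ k * gap l (Suc k) powr (1 - 2 * s))))"
    using fin0 by (rule order_trans) (intro add_mono I2P SS)
  have "\<dots> < \<infinity>" by (simp add: ennreal_mult_less_top)
  then show ?thesis unfolding in_sobolev_def using ff_int fin by (auto intro: le_less_trans)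
qed

end


lemma part1:
  fixes l :: "nat \<Rightarrow> real" and s :: real
  assumes l0: "l 0 = 1" and lS: "\<forall>j. 0 < l (Suc j) \<and> l (Suc j) < l j / 2"
    and gdec: "\<forall>j\<ge>2. gap l j < gap l (j - 1)" and s: "s > 0"
    and sm: "summable (\<lambda>j. gap l (j + 1) powr (2 - 2 * s) / (gap l (j + 2))\<^sup>2
                          * (\<Sum>k. 2 ^ (k + j + 2) * gap l (k + j + 2)))"
  shows "in_sobolev s (indicator (cantor_set l))"
proof -
  interpret cantor l using l0 lS by unfold_locales auto
  define u where "u m = 2 ^ m * l m" for m
  have u_dec: "u (Suc m) \<le> u m" for m
    using lS[rule_format, of m] unfolding u_def by (simp add: field_simps)
  have u_nonneg: "0 \<le> u m" for m unfolding u_def using lpos[of m] by simp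
  have gp: "0 < gap l (Suc k)" for k by (rule gapS_pos)
  have term_eq: "2 ^ (Suc m) * gap l (Suc m) = 2 * (u m - u (Suc m))" for m
    unfolding u_def gap_Suc by (simp add: algebra_simps)
  define T where "T j = (\<Sum>k. 2 ^ (k + j + 2) * gap l (k + j + 2))" for j
  have Ts: "summable (\<lambda>k. 2 ^ (k + j + 2) * gap l (k + j + 2))" for j
  proof (rule summableI_nonneg_bounded)
    fix k show "0 \<le> 2 ^ (k + j + 2) * gap l (k + j + 2)"
      using gp[of "k + j + 1"] by simp
  next
    fix n
    have "(\<Sum>k<n. 2 ^ (k + j + 2) * gap l (k + j + 2)) = (\<Sum>k<n. 2 * (u (k + j + 1) - u (Suc (k + j + 1))))"
    proof (intro sum.cong refl)
      fix k
      have kk: "k + j + 2 = Suc (k + j + 1)" by simp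
      show "2 ^ (k + j + 2) * gap l (k + j + 2) = 2 * (u (k + j + 1) - u (Suc (k + j + 1)))"
        by (simp only: kk term_eq)
    qed
    also have "\<dots> = 2 * (u (j + 1) - u (n + j + 1))"
    proof -
      have "(\<Sum>k<n. u (k + j + 1) - u (Suc (k + j + 1))) = - (\<Sum>k<n. u (Suc k + j + 1) - u (k + j + 1))"
        by (simp add: sum_negf[symmetric])
      also have "(\<Sum>k<n. u (Suc k + j + 1) - u (k + j + 1)) = u (n + j + 1) - u (0 + j + 1)"
        by (rule sum_lessThan_telescope)
      finally have t: "(\<Sum>k<n. u (k + j + 1) - u (Suc (k + j + 1))) = u (j + 1) - u (n + j + 1)" by simp
      have "(\<Sum>k<n. 2 * (u (k + j + 1) - u (Suc (k + j + 1)))) = 2 * (\<Sum>k<n. u (k + j + 1) - u (Suc (k + j + 1)))"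
        by (rule sum_distrib_left[symmetric])
      then show ?thesis by (simp only: t)
    qed
    also have "\<dots> \<le> 2 * u (j + 1)" using u_nonneg[of "n + j + 1"] by simp
    finally show "(\<Sum>k<n. 2 ^ (k + j + 2) * gap l (k + j + 2)) \<le> 2 * u (j + 1)" .
  qed
  have Tge: "2 ^ (j + 2) * gap l (j + 2) \<le> T j" for j
  proof -
    have "(\<Sum>k\<in>{0}. 2 ^ (k + j + 2) * gap l (k + j + 2)) \<le> T j"
      unfolding T_def by (rule sum_le_suminf[OF Ts]) (auto intro!: mult_nonneg_nonneg less_imp_le[OF gp] simp: numeral_2_eq_2)
    then show ?thesis by simp
  qed
  define f where "f j = gap l (j + 1) powr (2 - 2 * s) / (gap l (j + 2))\<^sup>2 * T j" for j
  define e where "e j = 2 ^ (j + 2) * gap l (j + 1) powr (1 - 2 * s)" for j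
  have g1: "0 < gap l (j + 1)" for j using gp[of j] by simp
  have g2: "0 < gap l (j + 2)" for j using gp[of "j + 1"] by (simp add: numeral_2_eq_2)
  have g21: "gap l (j + 2) < gap l (j + 1)" for j using gdec[rule_format, of "j + 2"] by simp
  have e_le: "e j \<le> f j" for j
  proof -
    have "e j = 2 ^ (j + 2) * (gap l (j + 1) powr (2 - 2 * s) / gap l (j + 1))"
    proof -
      have "gap l (j + 1) powr (2 - 2 * s) = gap l (j + 1) powr ((1 - 2 * s) + 1)" by simp
      also have "\<dots> = gap l (j + 1) powr (1 - 2 * s) * gap l (j + 1) powr 1"
        by (rule powr_add)
      also have "gap l (j + 1) powr 1 = gap l (j + 1)" using g1[of j] by simp
      finally show ?thesis unfolding e_def using g1[of j] by simp
    qed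
    also have "\<dots> \<le> 2 ^ (j + 2) * (gap l (j + 1) powr (2 - 2 * s) / gap l (j + 2))"
      using g1[of j] g2[of j] g21[of j] by (intro mult_left_mono divide_left_mono) auto
    also have "\<dots> = gap l (j + 1) powr (2 - 2 * s) / (gap l (j + 2))\<^sup>2 * (2 ^ (j + 2) * gap l (j + 2))"
      using g2[of j] by (simp add: power2_eq_square field_simps)
    also have "\<dots> \<le> f j" unfolding f_def using Tge[of j] g2[of j] by (intro mult_left_mono) auto
    finally show ?thesis .
  qed
  have e0: "0 \<le> e j" for j unfolding e_def by simp
  have se: "summable e"
    by (rule summable_comparison_test'[OF sm[folded T_def, folded f_def]]) (use e_le e0 in auto)
  have s12: "s < 1/2"
  proof (rule ccontr)
    assume "\<not> s < 1/2"
    then have e1: "1 \<le> e j" for j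
    proof -
      assume ns: "\<not> s < 1/2"
      have gl1: "gap l (j + 1) \<le> 1" using lle1[of j] lpos[of "Suc j"] by (simp add: gap_def)
      have "gap l (j + 1) powr 0 \<le> gap l (j + 1) powr (1 - 2 * s)"
        by (rule powr_mono'[OF _ _ gl1]) (use ns g1[of j] in auto)
      then have "1 \<le> gap l (j + 1) powr (1 - 2 * s)" using g1[of j] by simp
      moreover have "1 \<le> (2::real) ^ (j + 2)" by (rule one_le_power) simp
      ultimately show ?thesis unfolding e_def using mult_mono[of 1 "2 ^ (j + 2)" 1 "gap l (j + 1) powr (1 - 2 * s)"] by simp
    qed
    have "e \<longlonglongrightarrow> 0" by (rule summable_LIMSEQ_zero[OF se])
    then have "eventually (\<lambda>j. e j < 1) sequentially" by (rule order_tendstoD) simp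
    then obtain j where "e j < 1" by (auto simp: eventually_sequentially)
    then show False using e1[of j] by simp
  qed
  have sm2: "summable (\<lambda>k. 2 ^ k * gap l (Suc k) powr (1 - 2 * s))"
  proof -
    have "summable (\<lambda>k. e k / 4)" using se by (rule summable_divide)
    moreover have "(\<lambda>k. e k / 4) = (\<lambda>k. 2 ^ k * gap l (Suc k) powr (1 - 2 * s))"
      unfolding e_def by (auto simp: power_add)
    ultimately show ?thesis by simp
  qed
  show ?thesis by (rule sob_pos[OF s s12 sm2])
qed


lemma fat_closed: "2 ^ j * fat_l \<alpha> \<beta> j = 1 - \<beta> * (\<Sum>i<j. (2 * \<alpha>) ^ i)"
proof (induction j)
  case 0 then show ?case by simp
next
  case (Suc j)
  have "2 ^ Suc j * fat_l \<alpha> \<beta> (Suc j) = 2 ^ j * fat_l \<alpha> \<beta> j - \<beta> * (2 * \<alpha>) ^ j"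
    by (simp add: power_mult_distrib field_simps)
  also have "\<dots> = 1 - \<beta> * (\<Sum>i<Suc j. (2 * \<alpha>) ^ i)" using Suc by (simp add: algebra_simps)
  finally show ?case .
qed

lemma fat_pos:
  assumes a: "0 < \<alpha>" "\<alpha> < 1 / 2" and b: "0 < \<beta>" "\<beta> < 1 - 2 * \<alpha>"
  shows "0 < fat_l \<alpha> \<beta> j"
proof -
  have q: "2 * \<alpha> \<noteq> 1" "0 < 1 - 2 * \<alpha>" using a by auto
  have "(\<Sum>i<j. (2 * \<alpha>) ^ i) = (1 - (2 * \<alpha>) ^ j) / (1 - 2 * \<alpha>)"
    using sum_gp_strict[of "2 * \<alpha>" j] q by simp
  also have "\<dots> \<le> 1 / (1 - 2 * \<alpha>)"
    using a q by (intro divide_right_mono) auto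
  finally have S: "(\<Sum>i<j. (2 * \<alpha>) ^ i) \<le> 1 / (1 - 2 * \<alpha>)" .
  have "\<beta> * (\<Sum>i<j. (2 * \<alpha>) ^ i) \<le> \<beta> * (1 / (1 - 2 * \<alpha>))"
    using S b by (intro mult_left_mono) auto
  also have "\<dots> < 1" using b q by (simp add: field_simps)
  finally have "0 < 2 ^ j * fat_l \<alpha> \<beta> j" unfolding fat_closed by simp
  then show ?thesis by (simp add: zero_less_mult_iff)
qed

lemma fat_cantor:
  assumes a: "0 < \<alpha>" "\<alpha> < 1 / 2" and b: "0 < \<beta>" "\<beta> < 1 - 2 * \<alpha>"
  shows "cantor (fat_l \<alpha> \<beta>)"
proof
  show "fat_l \<alpha> \<beta> 0 = 1" by simp
  fix j
  have "0 < \<beta> * \<alpha> ^ j" using a b by simp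
  then show "0 < fat_l \<alpha> \<beta> (Suc j) \<and> fat_l \<alpha> \<beta> (Suc j) < fat_l \<alpha> \<beta> j / 2"
    using fat_pos[OF a b, of "Suc j"] by simp
qed

lemma fat_gap: "gap (fat_l \<alpha> \<beta>) (Suc k) = \<beta> * \<alpha> ^ k"
  by (simp add: gap_def field_simps)

lemma salpha_bounds:
  assumes a: "0 < \<alpha>" "\<alpha> < 1 / 2"
  shows "0 < s_alpha2 \<alpha>" "s_alpha2 \<alpha> < 1 / 2" "ln \<alpha> < - ln 2"
proof -
  have "ln \<alpha> < ln (1/2)" using a by simp
  then show l2: "ln \<alpha> < - ln 2" by (simp add: ln_div)
  have l0: "0 < ln (2::real)" by simp
  have la: "ln \<alpha> < 0" using l2 l0 by linarith
  have r1: "ln 2 / ln \<alpha> < 0" using l0 la by (simp add: divide_pos_neg)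
  then have "1 + ln 2 / ln \<alpha> < 1" by linarith
  then show "s_alpha2 \<alpha> < 1 / 2" unfolding s_alpha2_def by (rule divide_strict_right_mono) simp
  have r2: "-1 < ln 2 / ln \<alpha>" using l2 la by (simp add: field_simps)
  then have "0 < 1 + ln 2 / ln \<alpha>" by linarith
  then show "0 < s_alpha2 \<alpha>" unfolding s_alpha2_def by simp
qed

lemma fat_summable:
  assumes a: "0 < \<alpha>" "\<alpha> < 1 / 2" and b: "0 < \<beta>" and s: "s < s_alpha2 \<alpha>"
  shows "summable (\<lambda>k. 2 ^ k * gap (fat_l \<alpha> \<beta>) (Suc k) powr (1 - 2 * s))"
proof -
  define e where "e = 1 - 2 * s"
  have l2: "ln \<alpha> < - ln 2" using salpha_bounds[OF a] by simp
  have la: "ln \<alpha> < 0" using l2 by (smt (verit) ln_gt_zero one_less_numeral_iff semiring_norm(76))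
  have e1: "- ln 2 / ln \<alpha> < e" using s unfolding e_def s_alpha2_def by (simp add: field_simps)
  have "e * ln \<alpha> < - ln 2"
  proof -
    have "e * ln \<alpha> < (- ln 2 / ln \<alpha>) * ln \<alpha>" using e1 la by (intro mult_strict_right_mono_neg) auto
    also have "\<dots> = - ln 2" using la by simp
    finally show ?thesis .
  qed
  then have "\<alpha> powr e < exp (- ln 2)" using a by (simp add: powr_def mult.commute)
  then have r1: "\<alpha> powr e < 1 / 2" by (simp add: exp_minus)
  define r where "r = 2 * \<alpha> powr e"
  have r0: "0 \<le> r" "r < 1" unfolding r_def using r1 by auto
  have eq: "2 ^ k * gap (fat_l \<alpha> \<beta>) (Suc k) powr e = \<beta> powr e * r ^ k" for k
  proof -
    have "(\<alpha> ^ k) powr e = (\<alpha> powr e) ^ k"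
    proof -
      have "\<alpha> ^ k = \<alpha> powr real k" using a by (simp add: powr_realpow)
      then have "(\<alpha> ^ k) powr e = \<alpha> powr (real k * e)" by (simp add: powr_powr)
      also have "\<dots> = (\<alpha> powr e) ^ k" using a by (simp add: powr_power)
      finally show ?thesis .
    qed
    then show ?thesis unfolding fat_gap r_def using a b by (simp add: powr_mult power_mult_distrib)
  qed
  have "summable (\<lambda>k. \<beta> powr e * r ^ k)" using r0 by (intro summable_mult summable_geometric) simp
  then show ?thesis unfolding e_def[symmetric] eq .
qed


theorem proposition4p10:
  shows "(\<forall>(l::nat \<Rightarrow> real) (s::real).
            l 0 = 1 \<and> (\<forall>j. 0 < l (Suc j) \<and> l (Suc j) < l j / 2)
          \<and> (\<forall>j\<ge>1. gap l j < l j) \<and> (\<forall>j\<ge>2. gap l j < gap l (j - 1))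
          \<and> s > 0
          \<and> summable (\<lambda>j. gap l (j + 1) powr (2 - 2 * s) / (gap l (j + 2))\<^sup>2
                          * (\<Sum>k. 2 ^ (k + j + 2) * gap l (k + j + 2)))
          \<longrightarrow> in_sobolev s (indicator (cantor_set l)))
       \<and> (\<forall>(\<alpha>::real) (\<beta>::real) (s::real).
            0 < \<alpha> \<and> \<alpha> < 1 / 2 \<and> 0 < \<beta> \<and> \<beta> < 1 - 2 * \<alpha>
          \<longrightarrow> 0 < s_alpha2 \<alpha> \<and> s_alpha2 \<alpha> < 1 / 2
            \<and> (s < s_alpha2 \<alpha> \<longrightarrow> in_sobolev s (indicator (cantor_set (fat_l \<alpha> \<beta>)))))"
proof (intro conjI allI impI)
  fix l :: "nat \<Rightarrow> real" and s :: real
  assume H: "l 0 = 1 \<and> (\<forall>j. 0 < l (Suc j) \<and> l (Suc j) < l j / 2)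
          \<and> (\<forall>j\<ge>1. gap l j < l j) \<and> (\<forall>j\<ge>2. gap l j < gap l (j - 1))
          \<and> s > 0
          \<and> summable (\<lambda>j. gap l (j + 1) powr (2 - 2 * s) / (gap l (j + 2))\<^sup>2
                          * (\<Sum>k. 2 ^ (k + j + 2) * gap l (k + j + 2)))"
  then show "in_sobolev s (indicator (cantor_set l))"
    by (intro part1) auto
next
  fix \<alpha> \<beta> s :: real
  assume H: "0 < \<alpha> \<and> \<alpha> < 1 / 2 \<and> 0 < \<beta> \<and> \<beta> < 1 - 2 * \<alpha>"
  then have a: "0 < \<alpha>" "\<alpha> < 1 / 2" and b: "0 < \<beta>" "\<beta> < 1 - 2 * \<alpha>" by auto
  show "0 < s_alpha2 \<alpha>" by (rule salpha_bounds(1)[OF a])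
  show "s_alpha2 \<alpha> < 1 / 2" by (rule salpha_bounds(2)[OF a])
  assume s: "s < s_alpha2 \<alpha>"
  interpret cantor "fat_l \<alpha> \<beta>" by (rule fat_cantor[OF a b])
  show "in_sobolev s (indicator (cantor_set (fat_l \<alpha> \<beta>)))"
  proof (cases "s \<le> 0")
    case True then show ?thesis by (rule sob_nonpos)
  next
    case False
    then have "0 < s" by simp
    moreover have "s < 1 / 2" using s salpha_bounds(2)[OF a] by linarith
    ultimately show ?thesis by (rule sob_pos) (rule fat_summable[OF a b(1) s])
  qed
qed


end
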